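(* For any non-splitting CSS code, none of the gates $H$, $PH$, $HP$ (single-qubit) and $\mathsf{CNOT}$ (two-qubit) is $1$-local-Clifford partially addressable.
   Context: A CSS code $\mathsf{CSS}(A,B)$ on $n$ qubits is given by subspaces $A,B\subseteq\mathbb{F}_2^n$ with $a\cdot b=0$ for all $a\in A,b\in B$; its codespace is the common $+1$-eigenspace of all $X^a$ ($a\in A$) and $Z^b$ ($b\in B$), where $G^a=\bigotimes_{i:a_i=1}G_i$. A logical operator is a unitary preserving the codespace. A subspace $A\subseteq\mathbb{F}_2^n$ splits on a non-empty $h\subsetneq\{1,\dots,n\}$ if $A=A_1\oplus A_2$ with $A_1$ having support $h$ and $A_2$ supported on the complement of $h$; the code splits on $h$ if both $A$ and $B$ do, and is non-splitting if it splits on no such $h$. $P=\mathrm{diag}(1,i)$, $H$ is Hadamard. A $1$-local Clifford circuit is a tensor product of single-qubit Clifford gates. Fix logical Pauli operators $\bar X_j,\bar Z_j$ for the $k$ logical qubits; a logical operator $G$ has logical action $\bar W$ ($W=\sum_j\alpha_jW_j$ in the Pauli basis) if $G|\psi\rangle=\sum_j\alpha_j\bar W_j|\psi\rangle$ for all codestates. A $p$-qubit unitary $U$ is $1$-local-Clifford partially addressable on the code if there exist a set $I$ of pairwise disjoint ordered $p$-tuples of logical qubits, $I\neq\emptyset$ and not covering all logical qubits, and a $1$-local Clifford circuit that is a logical operator whose logical action is $\bar U$ on each tuple of $I$ (identity on the remaining logical qubits). *)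

theory Defs
  imports Complex_Main "HOL-Library.FuncSet"
begin

section \<open>Binary vectors: subsets of {0..<n} (F_2^n, addition = symmetric difference)\<close>

definition sdiff :: "nat set \<Rightarrow> nat set \<Rightarrow> nat set" where
  "sdiff a b = (a - b) \<union> (b - a)"

definition f2_subspace :: "nat \<Rightarrow> nat set set \<Rightarrow> bool" where
  "f2_subspace n A \<longleftrightarrow> A \<subseteq> Pow {0..<n} \<and> {} \<in> A \<and> (\<forall>a\<in>A. \<forall>b\<in>A. sdiff a b \<in> A)"

definition dimF2 :: "nat set set \<Rightarrow> nat" where
  "dimF2 A = (THE d. card A = 2 ^ d)"

definition css_code :: "nat \<Rightarrow> nat set set \<Rightarrow> nat set set \<Rightarrow> bool" where
  "css_code n A B \<longleftrightarrow> f2_subspace n A \<and> f2_subspace n B \<and>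
     (\<forall>a\<in>A. \<forall>b\<in>B. even (card (a \<inter> b)))"

definition subspace_splits :: "nat \<Rightarrow> nat set set \<Rightarrow> nat set \<Rightarrow> bool" where
  "subspace_splits n A h \<longleftrightarrow> (\<exists>A1 A2. f2_subspace n A1 \<and> f2_subspace n A2 \<and>
      (\<forall>a\<in>A1. a \<subseteq> h) \<and> (\<forall>a\<in>A2. a \<subseteq> {0..<n} - h) \<and>
      A = {sdiff a1 a2 | a1 a2. a1 \<in> A1 \<and> a2 \<in> A2})"

definition code_splits :: "nat \<Rightarrow> nat set set \<Rightarrow> nat set set \<Rightarrow> nat set \<Rightarrow> bool" where
  "code_splits n A B h \<longleftrightarrow> subspace_splits n A h \<and> subspace_splits n B h"

definition non_splitting :: "nat \<Rightarrow> nat set set \<Rightarrow> nat set set \<Rightarrow> bool" where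
  "non_splitting n A B \<longleftrightarrow>
     (\<forall>h. h \<noteq> {} \<and> h \<subset> {0..<n} \<longrightarrow> \<not> code_splits n A B h)"

(* a state is a function on computational basis strings, a basis string being the set of
   qubits in state |1>; the state vanishes outside Pow {0..<n} *)
type_synonym state = "nat set \<Rightarrow> complex"

definition states :: "nat \<Rightarrow> state set" where
  "states n = {\<psi>. \<forall>x. \<not> x \<subseteq> {0..<n} \<longrightarrow> \<psi> x = 0}"

definition Xop :: "nat set \<Rightarrow> state \<Rightarrow> state" where
  "Xop a \<psi> = (\<lambda>x. \<psi> (sdiff x a))"

definition Zop :: "nat set \<Rightarrow> state \<Rightarrow> state" where
  "Zop b \<psi> = (\<lambda>x. (-1) ^ card (x \<inter> b) * \<psi> x)"

definition codespace :: "nat \<Rightarrow> nat set set \<Rightarrow> nat set set \<Rightarrow> state set" where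
  "codespace n A B = {\<psi> \<in> states n. (\<forall>a\<in>A. Xop a \<psi> = \<psi>) \<and> (\<forall>b\<in>B. Zop b \<psi> = \<psi>)}"

type_synonym gate1 = "bool \<Rightarrow> bool \<Rightarrow> complex"

(* 0 = I, 1 = X, 2 = Y, 3 = Z ; row index first, True = |1> *)
definition pauli1 :: "nat \<Rightarrow> gate1" where
  "pauli1 c = (\<lambda>a b.
     if c = 1 then (if a \<noteq> b then 1 else 0)
     else if c = 2 then (if a = b then 0 else if a then \<i> else - \<i>)
     else if c = 3 then (if a = b then (if a then -1 else 1) else 0)
     else (if a = b then 1 else 0))"

definition mmult1 :: "gate1 \<Rightarrow> gate1 \<Rightarrow> gate1" where
  "mmult1 f g = (\<lambda>a b. \<Sum>c\<in>UNIV. f a c * g c b)"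

definition adj1 :: "gate1 \<Rightarrow> gate1" where
  "adj1 f = (\<lambda>a b. cnj (f b a))"

definition unitary1 :: "gate1 \<Rightarrow> bool" where
  "unitary1 g \<longleftrightarrow> mmult1 g (adj1 g) = pauli1 0"

definition pauli_group1 :: "gate1 set" where
  "pauli_group1 = {(\<lambda>a b. c * pauli1 j a b) | c j. c \<in> {1, -1, \<i>, - \<i>} \<and> j < 4}"

definition clifford1 :: "gate1 \<Rightarrow> bool" where
  "clifford1 g \<longleftrightarrow> unitary1 g \<and>
     (\<forall>P\<in>pauli_group1. mmult1 (mmult1 g P) (adj1 g) \<in> pauli_group1)"

definition circuit :: "nat \<Rightarrow> (nat \<Rightarrow> gate1) \<Rightarrow> state \<Rightarrow> state" where
  "circuit n g \<psi> = (\<lambda>x. if x \<subseteq> {0..<n}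
       then \<Sum>y\<in>Pow {0..<n}. (\<Prod>i<n. g i (i \<in> x) (i \<in> y)) * \<psi> y else 0)"

definition one_local_clifford :: "nat \<Rightarrow> (nat \<Rightarrow> gate1) \<Rightarrow> bool" where
  "one_local_clifford n g \<longleftrightarrow> (\<forall>i<n. clifford1 (g i))"

definition logical_operator :: "nat \<Rightarrow> nat set set \<Rightarrow> nat set set \<Rightarrow> (state \<Rightarrow> state) \<Rightarrow> bool" where
  "logical_operator n A B G \<longleftrightarrow> G ` codespace n A B \<subseteq> codespace n A B"

definition num_logical :: "nat \<Rightarrow> nat set set \<Rightarrow> nat set set \<Rightarrow> nat" where
  "num_logical n A B = n - dimF2 A - dimF2 B"

(* logical X_j = X^(u j), logical Z_j = Z^(v j), j < k *)
definition css_logicals :: "nat \<Rightarrow> nat set set \<Rightarrow> nat set set \<Rightarrow> (nat \<Rightarrow> nat set) \<Rightarrow> (nat \<Rightarrow> nat set) \<Rightarrow> bool" where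
  "css_logicals n A B u v \<longleftrightarrow> (let k = num_logical n A B in
     (\<forall>j<k. u j \<subseteq> {0..<n} \<and> v j \<subseteq> {0..<n} \<and>
        (\<forall>b\<in>B. even (card (u j \<inter> b))) \<and> (\<forall>a\<in>A. even (card (v j \<inter> a)))) \<and>
     (\<forall>i<k. \<forall>j<k. odd (card (v i \<inter> u j)) \<longleftrightarrow> i = j))"

definition lpauli1 :: "nat set \<Rightarrow> nat set \<Rightarrow> nat \<Rightarrow> state \<Rightarrow> state" where
  "lpauli1 a b c \<psi> = (if c = 1 then Xop a \<psi>
      else if c = 2 then (\<lambda>x. \<i> * Xop a (Zop b \<psi>) x)
      else if c = 3 then Zop b \<psi> else \<psi>)"

(* logical version of the Pauli string s (s j \<in> {0,1,2,3} for I,X,Y,Z on logical qubit j) *)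
fun lpauli :: "(nat \<Rightarrow> nat set) \<Rightarrow> (nat \<Rightarrow> nat set) \<Rightarrow> (nat \<Rightarrow> nat) \<Rightarrow> nat \<Rightarrow> state \<Rightarrow> state" where
  "lpauli u v s 0 = id"
| "lpauli u v s (Suc j) = lpauli u v s j \<circ> lpauli1 (u j) (v j) (s j)"

(* a k-qubit matrix: entries indexed by basis strings (subsets of {0..<k}) *)
type_synonym mat = "nat set \<Rightarrow> nat set \<Rightarrow> complex"

definition pauli_strings :: "nat \<Rightarrow> (nat \<Rightarrow> nat) set" where
  "pauli_strings k = PiE {0..<k} (\<lambda>_. {0..<4})"

definition pstr :: "nat \<Rightarrow> (nat \<Rightarrow> nat) \<Rightarrow> mat" where
  "pstr k s = (\<lambda>x y. \<Prod>j<k. pauli1 (s j) (j \<in> x) (j \<in> y))"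

(* coefficient alpha_s = tr(W_s^dagger W) / 2^k *)
definition pcoef :: "nat \<Rightarrow> mat \<Rightarrow> (nat \<Rightarrow> nat) \<Rightarrow> complex" where
  "pcoef k W s = (\<Sum>x\<in>Pow {0..<k}. \<Sum>y\<in>Pow {0..<k}. cnj (pstr k s x y) * W x y) / 2 ^ k"

definition has_logical_action ::
  "nat \<Rightarrow> nat set set \<Rightarrow> nat set set \<Rightarrow> (nat \<Rightarrow> nat set) \<Rightarrow> (nat \<Rightarrow> nat set)
     \<Rightarrow> (state \<Rightarrow> state) \<Rightarrow> mat \<Rightarrow> bool" where
  "has_logical_action n A B u v G W \<longleftrightarrow> (let k = num_logical n A B in
     \<forall>\<psi>\<in>codespace n A B.
       G \<psi> = (\<lambda>x. \<Sum>s\<in>pauli_strings k. pcoef k W s * lpauli u v s k \<psi> x))"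

(* the k-qubit operator acting as the p-qubit matrix U on each ordered tuple t of I
   (qubit m of U acts on logical qubit t!m) and as the identity elsewhere *)
definition tuple_pos :: "nat list \<Rightarrow> nat set \<Rightarrow> nat set" where
  "tuple_pos t x = {m. m < length t \<and> t ! m \<in> x}"

definition on_tuples :: "nat list set \<Rightarrow> mat \<Rightarrow> mat" where
  "on_tuples I U = (\<lambda>x y. (\<Prod>t\<in>I. U (tuple_pos t x) (tuple_pos t y)) *
      (if x - \<Union>(set ` I) = y - \<Union>(set ` I) then 1 else 0))"

definition partially_addressable ::
  "nat \<Rightarrow> nat set set \<Rightarrow> nat set set \<Rightarrow> (nat \<Rightarrow> nat set) \<Rightarrow> (nat \<Rightarrow> nat set) \<Rightarrow> nat \<Rightarrow> mat \<Rightarrow> bool" where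
  "partially_addressable n A B u v p U \<longleftrightarrow> (let k = num_logical n A B in
     \<exists>I g. I \<noteq> {} \<and>
       (\<forall>t\<in>I. length t = p \<and> distinct t \<and> set t \<subseteq> {0..<k}) \<and>
       (\<forall>t\<in>I. \<forall>t'\<in>I. t \<noteq> t' \<longrightarrow> set t \<inter> set t' = {}) \<and>
       \<Union>(set ` I) \<noteq> {0..<k} \<and>
       one_local_clifford n g \<and>
       logical_operator n A B (circuit n g) \<and>
       has_logical_action n A B u v (circuit n g) (on_tuples I U))"

definition Hgate1 :: gate1 where
  "Hgate1 = (\<lambda>a b. (if a \<and> b then -1 else 1) / complex_of_real (sqrt 2))"

definition Pgate1 :: gate1 where
  "Pgate1 = (\<lambda>a b. if a = b then (if a then \<i> else 1) else 0)"

definition as_mat1 :: "gate1 \<Rightarrow> mat" where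
  "as_mat1 g = (\<lambda>x y. g (0 \<in> x) (0 \<in> y))"

definition gate_H :: mat where "gate_H = as_mat1 Hgate1"
definition gate_PH :: mat where "gate_PH = as_mat1 (mmult1 Pgate1 Hgate1)"
definition gate_HP :: mat where "gate_HP = as_mat1 (mmult1 Hgate1 Pgate1)"

(* CNOT with control qubit 0 and target qubit 1 *)
definition gate_CNOT :: mat where
  "gate_CNOT = (\<lambda>x y. if x = (if 0 \<in> y then sdiff y {1} else y) then 1 else 0)"

end

theory Submission
  imports Defs
begin
lemma sdiff_mem[simp]: "i \<in> sdiff a b \<longleftrightarrow> (i \<in> a) \<noteq> (i \<in> b)"
  by (auto simp: sdiff_def)

lemma sdiff_comm: "sdiff a b = sdiff b a" by auto
lemma sdiff_assoc: "sdiff (sdiff a b) c = sdiff a (sdiff b c)" by auto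
lemma sdiff_self[simp]: "sdiff a a = {}" by auto
lemma sdiff_empty[simp]: "sdiff a {} = a" "sdiff {} a = a" by auto
lemma sdiff_cancel[simp]: "sdiff a (sdiff a b) = b" "sdiff (sdiff b a) a = b" by auto
lemma sdiff_subset: "a \<subseteq> S \<Longrightarrow> b \<subseteq> S \<Longrightarrow> sdiff a b \<subseteq> S" by auto
lemma finite_sdiff[simp]: "finite a \<Longrightarrow> finite b \<Longrightarrow> finite (sdiff a b)"
  by (simp add: sdiff_def)
lemma sdiff_eq_empty_iff[simp]: "sdiff a b = {} \<longleftrightarrow> a = b" by auto

lemma card_sdiff_eq: assumes "finite P" "finite Q"
  shows "card (sdiff P Q) + 2 * card (P \<inter> Q) = card P + card Q"
proof -
  have d: "sdiff P Q = (P - Q) \<union> (Q - P)" "(P - Q) \<inter> (Q - P) = {}" by (auto simp: sdiff_def)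
  have "card (sdiff P Q) = card (P - Q) + card (Q - P)"
    using d assms by (simp add: card_Un_disjoint)
  moreover have "card (P - Q) = card P - card (P \<inter> Q)"
    using assms by (simp add: card_Diff_subset_Int)
  moreover have "card (Q - P) = card Q - card (P \<inter> Q)"
    using assms by (metis card_Diff_subset_Int finite_Int inf_commute)
  moreover have "card (P \<inter> Q) \<le> card P" "card (P \<inter> Q) \<le> card Q"
    using assms by (auto intro: card_mono)
  ultimately show ?thesis by linarith
qed

lemma even_card_sdiff: assumes "finite P" "finite Q"
  shows "even (card (sdiff P Q)) \<longleftrightarrow> (even (card P) \<longleftrightarrow> even (card Q))"
  using arg_cong[OF card_sdiff_eq[OF assms], of even] by simp

lemma sdiff_Int: "sdiff P Q \<inter> r = sdiff (P \<inter> r) (Q \<inter> r)" by auto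

lemma even_card_sdiff_Int: assumes "finite P" "finite Q"
  shows "even (card (sdiff P Q \<inter> r)) \<longleftrightarrow> (even (card (P \<inter> r)) \<longleftrightarrow> even (card (Q \<inter> r)))"
  unfolding sdiff_Int using assms by (intro even_card_sdiff) auto

lemma even_card_Int_sdiff: assumes "finite P" "finite Q"
  shows "even (card (r \<inter> sdiff P Q)) \<longleftrightarrow> (even (card (r \<inter> P)) \<longleftrightarrow> even (card (r \<inter> Q)))"
  using even_card_sdiff_Int[OF assms, of r] by (simp add: inf_commute)

lemma neg1_pow_card: "finite P \<Longrightarrow> finite Q \<Longrightarrow>
   (-1::'a::ring_1) ^ card (sdiff P Q \<inter> r) = (-1) ^ card (P \<inter> r) * (-1) ^ card (Q \<inter> r)"
  using even_card_sdiff_Int[of P Q r]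
  by (cases "even (card (P \<inter> r))"; cases "even (card (Q \<inter> r))"; simp)

lemma subsp_sub: "f2_subspace n X \<Longrightarrow> x \<in> X \<Longrightarrow> x \<subseteq> {0..<n}"
  by (auto simp: f2_subspace_def)
lemma subsp_fin: "f2_subspace n X \<Longrightarrow> x \<in> X \<Longrightarrow> finite x"
  by (meson subsp_sub finite_atLeastLessThan finite_subset)
lemma subsp_finite: "f2_subspace n X \<Longrightarrow> finite X"
  unfolding f2_subspace_def by (meson finite_Pow_iff finite_atLeastLessThan finite_subset)
lemma subsp_empty: "f2_subspace n X \<Longrightarrow> {} \<in> X"
  by (auto simp: f2_subspace_def)
lemma subsp_sdiff: "f2_subspace n X \<Longrightarrow> x \<in> X \<Longrightarrow> y \<in> X \<Longrightarrow> sdiff x y \<in> X"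
  by (auto simp: f2_subspace_def)

definition perp :: "nat \<Rightarrow> nat set set \<Rightarrow> nat set set" where
  "perp n X = {y. y \<subseteq> {0..<n} \<and> (\<forall>x\<in>X. even (card (x \<inter> y)))}"

lemma perp_subspace: assumes "f2_subspace n X" shows "f2_subspace n (perp n X)"
  unfolding f2_subspace_def perp_def
proof (intro conjI ballI)
  show "{y. y \<subseteq> {0..<n} \<and> (\<forall>x\<in>X. even (card (x \<inter> y)))} \<subseteq> Pow {0..<n}" by auto
  show "{} \<in> {y. y \<subseteq> {0..<n} \<and> (\<forall>x\<in>X. even (card (x \<inter> y)))}" by auto
  fix a b assume a: "a \<in> {y. y \<subseteq> {0..<n} \<and> (\<forall>x\<in>X. even (card (x \<inter> y)))}"
    and b: "b \<in> {y. y \<subseteq> {0..<n} \<and> (\<forall>x\<in>X. even (card (x \<inter> y)))}"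
  have fa: "finite a" "finite b" using a b finite_subset by auto
  show "sdiff a b \<in> {y. y \<subseteq> {0..<n} \<and> (\<forall>x\<in>X. even (card (x \<inter> y)))}"
    using a b even_card_Int_sdiff[OF fa] by (auto simp: sdiff_def)
qed

lemma sum_pow_prod:
  fixes F :: "nat \<Rightarrow> bool \<Rightarrow> 'a::comm_semiring_1"
  shows "(\<Sum>y\<in>Pow {0..<n}. \<Prod>i<n. F i (i \<in> y)) = (\<Prod>i<(n::nat). F i False + F i True)"
proof (induction n)
  case 0 then show ?case by simp
next
  case (Suc n)
  have P: "Pow {0..<Suc n} = Pow {0..<n} \<union> insert n ` Pow {0..<n}"
    by (simp add: atLeast0_lessThan_Suc Pow_insert)
  have disj: "Pow {0..<n} \<inter> insert n ` Pow {0..<n} = {}" by auto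
  have inj: "inj_on (insert n) (Pow {0..<n})"
    unfolding inj_on_def by (metis PowD atLeastLessThan_iff insert_ident less_irrefl subset_iff)
  have s1: "(\<Sum>y\<in>Pow {0..<n}. \<Prod>i<Suc n. F i (i \<in> y)) = (\<Sum>y\<in>Pow {0..<n}. \<Prod>i<n. F i (i \<in> y)) * F n False"
    unfolding sum_distrib_right
  proof (rule sum.cong)
    fix x assume "x \<in> Pow {0..<n}"
    then have "n \<notin> x" by auto
    then show "(\<Prod>i<Suc n. F i (i \<in> x)) = (\<Prod>i<n. F i (i \<in> x)) * F n False"
      by (simp add: prod.lessThan_Suc)
  qed simp
  have s2: "(\<Sum>y\<in>insert n ` Pow {0..<n}. \<Prod>i<Suc n. F i (i \<in> y)) = (\<Sum>y\<in>Pow {0..<n}. \<Prod>i<n. F i (i \<in> y)) * F n True"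
    unfolding sum.reindex[OF inj] sum_distrib_right
    apply (rule sum.cong, simp)
    apply (simp add: prod.lessThan_Suc)
    done
  have fin: "finite (Pow {0..<n})" "finite (insert n ` Pow {0..<n})" by auto
  have "(\<Sum>y\<in>Pow {0..<Suc n}. \<Prod>i<Suc n. F i (i \<in> y)) =
     (\<Sum>y\<in>Pow {0..<n}. \<Prod>i<Suc n. F i (i \<in> y)) + (\<Sum>y\<in>insert n ` Pow {0..<n}. \<Prod>i<Suc n. F i (i \<in> y))"
    unfolding P by (rule sum.union_disjoint[OF fin disj])
  also have "\<dots> = (\<Prod>i<Suc n. F i False + F i True)"
    unfolding s1 s2 Suc.IH by (simp add: prod.lessThan_Suc distrib_left)
  finally show ?case .
qed

lemma subsp_pow2: "f2_subspace n X \<Longrightarrow> \<exists>d. card X = 2 ^ d"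
proof (induction n arbitrary: X)
  case 0
  then have "X \<subseteq> {{}}" by (auto simp: f2_subspace_def)
  moreover have "{} \<in> X" using 0 subsp_empty by blast
  ultimately have "X = {{}}" by blast
  then show ?case by (rule_tac x=0 in exI) simp
next
  case (Suc n)
  define X0 where "X0 = {x\<in>X. n \<notin> x}"
  have sub0: "f2_subspace n X0"
    using Suc.prems unfolding f2_subspace_def X0_def
    by (auto simp: less_Suc_eq subset_iff)
  obtain d where d: "card X0 = 2 ^ d" using Suc.IH[OF sub0] by blast
  have finX0: "finite X0" using subsp_finite[OF sub0] .
  show ?case
  proof (cases "\<exists>x1\<in>X. n \<in> x1")
    case False
    then have "X = X0" unfolding X0_def by auto
    then show ?thesis using d by auto
  next
    case True
    then obtain x1 where x1: "x1 \<in> X" "n \<in> x1" by blast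
    have "X = X0 \<union> sdiff x1 ` X0"
    proof
      show "X \<subseteq> X0 \<union> sdiff x1 ` X0"
      proof
        fix x assume x: "x \<in> X"
        show "x \<in> X0 \<union> sdiff x1 ` X0"
        proof (cases "n \<in> x")
          case True
          have "sdiff x1 x \<in> X0" unfolding X0_def using x x1 True subsp_sdiff[OF Suc.prems] by auto
          moreover have "x = sdiff x1 (sdiff x1 x)" by simp
          ultimately show ?thesis by blast
        next
          case False then show ?thesis using x unfolding X0_def by auto
        qed
      qed
      show "X0 \<union> sdiff x1 ` X0 \<subseteq> X"
        unfolding X0_def using x1 subsp_sdiff[OF Suc.prems] by auto
    qed
    moreover have "X0 \<inter> sdiff x1 ` X0 = {}" using x1 unfolding X0_def by auto
    moreover have "inj_on (sdiff x1) X0" by (rule inj_onI) (metis sdiff_cancel(1))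
    ultimately have "card X = card X0 + card X0"
      using finX0 by (simp add: card_Un_disjoint card_image)
    then show ?thesis using d by (metis mult_2 power_Suc)
  qed
qed

lemma dimF2: assumes "f2_subspace n X" shows "card X = 2 ^ dimF2 X"
proof -
  obtain d where d: "card X = 2 ^ d" using subsp_pow2[OF assms] by blast
  have "dimF2 X = d" unfolding dimF2_def
    by (rule the_equality) (use d in auto)
  then show ?thesis using d by simp
qed

lemma prod_if_const: "finite A \<Longrightarrow> (\<Prod>i\<in>A. if P i then c else 1) = c ^ card {i\<in>A. P i}"
  by (simp add: prod.inter_filter[symmetric])

lemma char_sum_y: assumes "x \<subseteq> {0..<n}"
  shows "(\<Sum>y\<in>Pow {0..<n}. (-1::int) ^ card (x \<inter> y)) = (if x = {} then 2 ^ n else 0)"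
proof -
  have "(\<Sum>y\<in>Pow {0..<n}. (-1::int) ^ card (x \<inter> y)) =
        (\<Sum>y\<in>Pow {0..<n}. \<Prod>i<n. (if i \<in> x \<and> i \<in> y then -1 else 1))"
  proof (rule sum.cong)
    fix y assume "y \<in> Pow {0..<n}"
    then have "{i\<in>{..<n}. i \<in> x \<and> i \<in> y} = x \<inter> y" by auto
    then show "(-1::int) ^ card (x \<inter> y) = (\<Prod>i<n. (if i \<in> x \<and> i \<in> y then -1 else 1))"
      by (simp add: prod_if_const)
  qed simp
  also have "\<dots> = (\<Prod>i<n. (if i \<in> x \<and> False then -1 else 1) + (if i \<in> x \<and> True then -1 else 1))"
    by (rule sum_pow_prod)
  also have "\<dots> = (\<Prod>i<n. (if i \<in> x then 0 else 2))"
    by (rule prod.cong) auto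
  also have "\<dots> = (if x = {} then 2 ^ n else 0)"
  proof (cases "x = {}")
    case True then show ?thesis by simp
  next
    case False
    then obtain i where "i \<in> x" by blast
    then have "i < n" using assms by auto
    then show ?thesis using False \<open>i \<in> x\<close> by (intro prod_zero[THEN trans]) auto
  qed
  finally show ?thesis .
qed

lemma char_sum_x: assumes X: "f2_subspace n X"
  shows "(\<Sum>x\<in>X. (-1::int) ^ card (x \<inter> y)) = (if \<forall>x\<in>X. even (card (x \<inter> y)) then int (card X) else 0)"
proof (cases "\<forall>x\<in>X. even (card (x \<inter> y))")
  case True
  then show ?thesis by simp
next
  case False
  then obtain x0 where x0: "x0 \<in> X" "odd (card (x0 \<inter> y))" by blast
  let ?S = "(\<Sum>x\<in>X. (-1::int) ^ card (x \<inter> y))"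
  have "?S = (\<Sum>x\<in>X. (-1::int) ^ card (sdiff x x0 \<inter> y))"
    by (rule sum.reindex_bij_witness[where i="\<lambda>x. sdiff x x0" and j="\<lambda>x. sdiff x x0"])
       (auto intro: subsp_sdiff[OF X] x0)
  also have "\<dots> = (\<Sum>x\<in>X. - ((-1::int) ^ card (x \<inter> y)))"
    by (rule sum.cong) (use x0 subsp_fin[OF X] in \<open>auto simp: neg1_pow_card\<close>)
  also have "\<dots> = - ?S" by (simp add: sum_negf)
  finally have S0: "?S = 0" by simp
  have nP: "\<not> (\<forall>x\<in>X. even (card (x \<inter> y)))" using x0 by blast
  show ?thesis unfolding if_not_P[OF nP] by (rule S0)
qed

lemma perp_sub: "perp n X \<subseteq> Pow {0..<n}" by (auto simp: perp_def)

lemma card_perp: assumes X: "f2_subspace n X" shows "card X * card (perp n X) = 2 ^ n"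
proof -
  let ?f = "\<lambda>x y. (-1::int) ^ card (x \<inter> y)"
  have "(\<Sum>y\<in>Pow {0..<n}. \<Sum>x\<in>X. ?f x y) = (\<Sum>x\<in>X. \<Sum>y\<in>Pow {0..<n}. ?f x y)"
    by (rule sum.swap)
  also have "\<dots> = (\<Sum>x\<in>X. if x = {} then 2 ^ n else 0)"
    by (rule sum.cong) (auto simp: char_sum_y subsp_sub[OF X])
  also have "\<dots> = 2 ^ n" using subsp_empty[OF X] subsp_finite[OF X] by simp
  finally have 1: "(\<Sum>y\<in>Pow {0..<n}. \<Sum>x\<in>X. ?f x y) = 2 ^ n" .
  have "(\<Sum>y\<in>Pow {0..<n}. \<Sum>x\<in>X. ?f x y) = (\<Sum>y\<in>Pow {0..<n}. if y \<in> perp n X then int (card X) else 0)"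
    by (rule sum.cong) (auto simp: char_sum_x[OF X] perp_def)
  also have "\<dots> = (\<Sum>y\<in>Pow {0..<n} \<inter> perp n X. int (card X))"
    by (rule sum.inter_restrict[symmetric]) simp
  also have "Pow {0..<n} \<inter> perp n X = perp n X" using perp_sub by blast
  finally have "int (card (perp n X)) * int (card X) = 2 ^ n" using 1 by simp
  then have "int (card X * card (perp n X)) = int (2 ^ n)" by (simp add: mult.commute)
  then show ?thesis by (simp only: of_nat_eq_iff)
qed

lemma perp_perp: assumes B: "f2_subspace n B" shows "perp n (perp n B) = B"
proof
  show "B \<subseteq> perp n (perp n B)"
    using subsp_sub[OF B] by (auto simp: perp_def inf_commute)
  show "perp n (perp n B) \<subseteq> B"
  proof
    fix \<beta> assume \<beta>: "\<beta> \<in> perp n (perp n B)"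
    show "\<beta> \<in> B"
    proof (rule ccontr)
      assume nb: "\<beta> \<notin> B"
      have \<beta>sub: "\<beta> \<subseteq> {0..<n}" using \<beta> by (auto simp: perp_def)
      define B' where "B' = B \<union> sdiff \<beta> ` B"
      have B': "f2_subspace n B'"
        unfolding f2_subspace_def
      proof (intro conjI ballI)
        show "B' \<subseteq> Pow {0..<n}"
        proof
          fix x assume "x \<in> B'"
          then consider "x \<in> B" | b where "b \<in> B" "x = sdiff \<beta> b" unfolding B'_def by blast
          then show "x \<in> Pow {0..<n}"
          proof cases
            case 1 then show ?thesis using subsp_sub[OF B] by blast
          next
            case 2 then show ?thesis using subsp_sub[OF B] \<beta>sub sdiff_subset by blast
          qed
        qed
        show "{} \<in> B'" unfolding B'_def using subsp_empty[OF B] by auto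
        fix a b assume a: "a \<in> B'" and b: "b \<in> B'"
        show "sdiff a b \<in> B'"
        proof -
          { fix a1 b1 assume a1: "a1 \<in> B" and b1: "b1 \<in> B"
            have ab: "sdiff a1 b1 \<in> B" using subsp_sdiff[OF B a1 b1] .
            have e1: "sdiff (sdiff \<beta> a1) b1 = sdiff \<beta> (sdiff a1 b1)" by auto
            have e2: "sdiff a1 (sdiff \<beta> b1) = sdiff \<beta> (sdiff a1 b1)" by auto
            have e3: "sdiff (sdiff \<beta> a1) (sdiff \<beta> b1) = sdiff a1 b1" by auto
            have "sdiff a1 b1 \<in> B'" "sdiff (sdiff \<beta> a1) b1 \<in> B'" "sdiff a1 (sdiff \<beta> b1) \<in> B'"
               "sdiff (sdiff \<beta> a1) (sdiff \<beta> b1) \<in> B'"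
              unfolding e1 e2 e3 B'_def using ab by auto }
          then show ?thesis using a b unfolding B'_def by (elim UnE imageE) (simp_all only:)
        qed
      qed
      have disj: "B \<inter> sdiff \<beta> ` B = {}"
      proof (rule ccontr)
        assume "B \<inter> sdiff \<beta> ` B \<noteq> {}"
        then obtain b where "b \<in> B" "sdiff \<beta> b \<in> B" by blast
        then have "sdiff (sdiff \<beta> b) b \<in> B" using subsp_sdiff[OF B] by blast
        then show False using nb by simp
      qed
      have inj: "inj_on (sdiff \<beta>) B" by (rule inj_onI) (metis sdiff_cancel(1))
      have finB: "finite B" using subsp_finite[OF B] .
      have cB': "card B' = 2 * card B" unfolding B'_def
        using disj inj finB by (simp add: card_Un_disjoint card_image)
      have pe: "perp n B' = perp n B"
      proof
        show "perp n B' \<subseteq> perp n B" unfolding B'_def perp_def by auto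
        show "perp n B \<subseteq> perp n B'"
        proof
          fix y assume y: "y \<in> perp n B"
          have "even (card (sdiff \<beta> b \<inter> y))" if "b \<in> B" for b
          proof -
            have "even (card (\<beta> \<inter> y))" using \<beta> y by (auto simp: perp_def inf_commute)
            moreover have "even (card (b \<inter> y))" using y that by (auto simp: perp_def)
            ultimately show ?thesis
              using even_card_sdiff_Int[of \<beta> b y] \<beta>sub subsp_fin[OF B that] finite_subset by auto
          qed
          then show "y \<in> perp n B'" using y unfolding B'_def perp_def by auto
        qed
      qed
      have e1: "card B' * card (perp n B') = 2 ^ n" by (rule card_perp[OF B'])
      have e2: "card B * card (perp n B) = 2 ^ n" by (rule card_perp[OF B])
      from e1 have "(2 * card B) * card (perp n B) = 2 ^ n" by (simp only: cB' pe)
      then have "2 * (2::nat) ^ n = 2 ^ n" by (simp only: mult.assoc e2)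
      then show False by simp
    qed
  qed
qed

lemma Zop_fix_iff: "Zop b \<psi> = \<psi> \<longleftrightarrow> (\<forall>x. odd (card (x \<inter> b)) \<longrightarrow> \<psi> x = 0)"
proof
  assume h: "Zop b \<psi> = \<psi>"
  show "\<forall>x. odd (card (x \<inter> b)) \<longrightarrow> \<psi> x = 0"
  proof (intro allI impI)
    fix x assume "odd (card (x \<inter> b))"
    moreover have "(-1) ^ card (x \<inter> b) * \<psi> x = \<psi> x" using fun_cong[OF h, of x] by (simp add: Zop_def)
    ultimately show "\<psi> x = 0" by simp
  qed
next
  assume h: "\<forall>x. odd (card (x \<inter> b)) \<longrightarrow> \<psi> x = 0"
  show "Zop b \<psi> = \<psi>"
  proof
    fix x show "Zop b \<psi> x = \<psi> x"
      using h[rule_format, of x] by (cases "even (card (x \<inter> b))") (auto simp: Zop_def)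
  qed
qed

lemma Xop_fix_iff: "Xop a \<psi> = \<psi> \<longleftrightarrow> (\<forall>x. \<psi> (sdiff x a) = \<psi> x)"
  by (auto simp: Xop_def fun_eq_iff)

definition cw :: "nat set set \<Rightarrow> nat set \<Rightarrow> state" where
  "cw A x = (\<lambda>y. if sdiff x y \<in> A then 1 else 0)"

lemma Xop_cw: "Xop a (cw A y) = cw A (sdiff y a)"
proof -
  have "\<And>x. sdiff y (sdiff x a) = sdiff (sdiff y a) x" by auto
  then show ?thesis unfolding Xop_def cw_def by simp
qed

primrec lx :: "(nat \<Rightarrow> nat set) \<Rightarrow> nat set \<Rightarrow> nat \<Rightarrow> nat set" where
  "lx u m 0 = {}"
| "lx u m (Suc j) = (if j \<in> m then sdiff (lx u m j) (u j) else lx u m j)"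

lemma lx_sdiff: "lx u (sdiff m D) j = sdiff (lx u m j) (lx u D j)"
  by (induction j) (auto simp: sdiff_def)

lemma lx_zero: "(\<And>i. i < j \<Longrightarrow> i \<notin> m) \<Longrightarrow> lx u m j = {}"
  by (induction j) auto

lemma lx_single: "j < k \<Longrightarrow> lx u {j} k = u j"
proof (induction k)
  case 0 then show ?case by simp
next
  case (Suc k)
  show ?case
  proof (cases "j < k")
    case True then show ?thesis using Suc by simp
  next
    case False
    then have "j = k" using Suc by simp
    moreover have "lx u {k} k = {}" by (rule lx_zero) simp
    ultimately show ?thesis by simp
  qed
qed

lemma lx_empty[simp]: "lx u {} k = {}"
  by (induction k) auto

lemma lx_cong: "(\<And>i. i < k \<Longrightarrow> i \<in> m \<longleftrightarrow> i \<in> m') \<Longrightarrow> lx u m k = lx u m' k"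
  by (induction k) auto

locale cssL =
  fixes n :: nat and A B :: "nat set set" and u v :: "nat \<Rightarrow> nat set"
  assumes css: "css_code n A B" and lg: "css_logicals n A B u v"
begin

abbreviation "k \<equiv> num_logical n A B"
abbreviation "Q \<equiv> codespace n A B"

lemma subA: "f2_subspace n A" and subB: "f2_subspace n B"
  and orth: "a \<in> A \<Longrightarrow> b \<in> B \<Longrightarrow> even (card (a \<inter> b))"
  using css by (auto simp: css_code_def)

lemma u_sub: "j < k \<Longrightarrow> u j \<subseteq> {0..<n}" and v_sub: "j < k \<Longrightarrow> v j \<subseteq> {0..<n}"
  and u_B: "j < k \<Longrightarrow> b \<in> B \<Longrightarrow> even (card (u j \<inter> b))"
  and v_A: "j < k \<Longrightarrow> a \<in> A \<Longrightarrow> even (card (v j \<inter> a))"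
  and vu: "i < k \<Longrightarrow> j < k \<Longrightarrow> odd (card (v i \<inter> u j)) \<longleftrightarrow> i = j"
  using lg unfolding css_logicals_def Let_def by blast+

lemma u_fin: "j < k \<Longrightarrow> finite (u j)" using u_sub finite_subset by blast
lemma v_fin: "j < k \<Longrightarrow> finite (v j)" using v_sub finite_subset by blast
lemma A_fin: "a \<in> A \<Longrightarrow> finite a" using subsp_fin[OF subA] .
lemma B_fin: "b \<in> B \<Longrightarrow> finite b" using subsp_fin[OF subB] .

lemma u_perp: "j < k \<Longrightarrow> u j \<in> perp n B"
  using u_sub u_B by (auto simp: perp_def inf_commute)

lemma A_perp: assumes a: "a \<in> A" shows "a \<in> perp n B"
proof -
  have "\<forall>x\<in>B. even (card (x \<inter> a))" using orth[OF a] by (simp add: Int_commute)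
  then show ?thesis using subsp_sub[OF subA a] by (simp add: perp_def)
qed

lemma lx_perp: "j \<le> k \<Longrightarrow> lx u m j \<in> perp n B"
proof (induction j)
  case 0 then show ?case using subsp_empty[OF perp_subspace[OF subB]] by simp
next
  case (Suc j) then show ?case
    using subsp_sdiff[OF perp_subspace[OF subB]] u_perp by auto
qed

lemma lx_sub: "lx u m k \<subseteq> {0..<n}" using lx_perp[of k m] by (auto simp: perp_def)
lemma lx_fin: "finite (lx u m k)" using lx_sub finite_subset by blast

lemma lx_pair_gen: "i < k \<Longrightarrow> j \<le> k \<Longrightarrow> odd (card (v i \<inter> lx u m j)) \<longleftrightarrow> (i \<in> m \<and> i < j)"
proof (induction j)
  case 0 then show ?case by simp
next
  case (Suc j)
  have fl: "finite (lx u m j)" using lx_perp[of j m] Suc.prems finite_subset by (auto simp: perp_def)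
  show ?case
  proof (cases "j \<in> m")
    case True
    have "odd (card (v i \<inter> sdiff (lx u m j) (u j))) \<longleftrightarrow>
          (odd (card (v i \<inter> lx u m j)) \<noteq> odd (card (v i \<inter> u j)))"
      using even_card_Int_sdiff[OF fl u_fin, of j "v i"] Suc.prems by auto
    then show ?thesis using True Suc vu[of i j] by auto
  next
    case False then show ?thesis using Suc by (auto simp: less_Suc_eq)
  qed
qed

lemma lx_pair: "i < k \<Longrightarrow> odd (card (v i \<inter> lx u m k)) \<longleftrightarrow> i \<in> m"
  using lx_pair_gen[of i k m] by auto

lemma lx_in_A: "m \<subseteq> {0..<k} \<Longrightarrow> lx u m k \<in> A \<Longrightarrow> m = {}"
proof (rule ccontr)
  assume m: "m \<subseteq> {0..<k}" "lx u m k \<in> A" "m \<noteq> {}"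
  then obtain i where i: "i \<in> m" by blast
  then have "i < k" using m by auto
  then have "odd (card (v i \<inter> lx u m k))" using lx_pair i by auto
  then show False using v_A[OF \<open>i < k\<close> m(2)] by simp
qed

lemma lx_inj: "m \<subseteq> {0..<k} \<Longrightarrow> m' \<subseteq> {0..<k} \<Longrightarrow> sdiff (lx u m k) (lx u m' k) \<in> A \<Longrightarrow> m = m'"
  using lx_in_A[of "sdiff m m'"] by (auto simp: lx_sdiff[symmetric] sdiff_subset)

definition e :: "nat set \<Rightarrow> state" where "e m = cw A (lx u m k)"

lemma cw_in_Q: assumes x: "x \<in> perp n B" shows "cw A x \<in> Q"
proof -
  have xs: "x \<subseteq> {0..<n}" using x by (auto simp: perp_def)
  have st: "cw A x \<in> states n"
    unfolding states_def
  proof (intro CollectI allI impI)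
    fix y assume y: "\<not> y \<subseteq> {0..<n}"
    show "cw A x y = 0"
    proof (rule ccontr)
      assume "cw A x y \<noteq> 0"
      then have "sdiff x y \<in> A" by (auto simp: cw_def split: if_splits)
      then have "sdiff x (sdiff x y) \<subseteq> {0..<n}" using subsp_sub[OF subA] xs sdiff_subset by blast
      then show False using y by simp
    qed
  qed
  have xa: "\<forall>a\<in>A. Xop a (cw A x) = cw A x"
  proof
    fix a assume a: "a \<in> A"
    show "Xop a (cw A x) = cw A x"
    proof
      fix y
      have "sdiff x (sdiff y a) \<in> A \<longleftrightarrow> sdiff x y \<in> A"
      proof
        assume "sdiff x (sdiff y a) \<in> A"
        then have "sdiff (sdiff x (sdiff y a)) a \<in> A" using subsp_sdiff[OF subA] a by blast
        moreover have "sdiff (sdiff x (sdiff y a)) a = sdiff x y" by auto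
        ultimately show "sdiff x y \<in> A" by simp
      next
        assume "sdiff x y \<in> A"
        then have "sdiff (sdiff x y) a \<in> A" using subsp_sdiff[OF subA] a by blast
        moreover have "sdiff (sdiff x y) a = sdiff x (sdiff y a)" by auto
        ultimately show "sdiff x (sdiff y a) \<in> A" by simp
      qed
      then show "Xop a (cw A x) y = cw A x y" by (simp add: Xop_def cw_def)
    qed
  qed
  have zb: "\<forall>b\<in>B. Zop b (cw A x) = cw A x"
  proof
    fix b assume b: "b \<in> B"
    show "Zop b (cw A x) = cw A x"
      unfolding Zop_fix_iff
    proof (intro allI impI)
      fix y assume odd: "odd (card (y \<inter> b))"
      show "cw A x y = 0"
      proof (rule ccontr)
        assume "cw A x y \<noteq> 0"
        then have a: "sdiff x y \<in> A" by (auto simp: cw_def split: if_splits)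
        have "y = sdiff x (sdiff x y)" by simp
        have fx: "finite x" using xs finite_subset by blast
        have "even (card (sdiff x y \<inter> b))" using orth[OF a b] .
        moreover have "even (card (x \<inter> b))" using x b by (auto simp: perp_def inf_commute)
        ultimately have "even (card (sdiff x (sdiff x y) \<inter> b))"
          using even_card_sdiff_Int[OF fx A_fin[OF a], of b] by auto
        then show False using odd by simp
      qed
    qed
  qed
  show ?thesis unfolding codespace_def using st xa zb by blast
qed

lemma e_in_Q: "e m \<in> Q" unfolding e_def by (rule cw_in_Q[OF lx_perp]) simp

lemma Zop_cw: assumes b: "b \<subseteq> {0..<n}" "\<forall>a\<in>A. even (card (a \<inter> b))" and y: "finite y"
  shows "Zop b (cw A y) = (\<lambda>z. (-1) ^ card (y \<inter> b) * cw A y z)"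
proof
  fix z
  show "Zop b (cw A y) z = (-1) ^ card (y \<inter> b) * cw A y z"
  proof (cases "sdiff y z \<in> A")
    case True
    have "z = sdiff y (sdiff y z)" by simp
    then have "(-1::complex) ^ card (z \<inter> b) = (-1) ^ card (y \<inter> b) * (-1) ^ card (sdiff y z \<inter> b)"
      using neg1_pow_card[OF y A_fin[OF True], of b] by metis
    also have "\<dots> = (-1) ^ card (y \<inter> b)" using b(2) True by simp
    finally show ?thesis by (simp add: Zop_def cw_def True)
  next
    case False then show ?thesis by (simp add: Zop_def cw_def)
  qed
qed

lemma Xop_e: "j < k \<Longrightarrow> Xop (u j) (e m) = e (sdiff m {j})"
  unfolding e_def Xop_cw by (simp add: lx_sdiff lx_single)

lemma Zop_e: assumes j: "j < k" shows "Zop (v j) (e m) = (\<lambda>z. (if j \<in> m then -1 else 1) * e m z)"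
proof -
  have "\<forall>a\<in>A. even (card (a \<inter> v j))" using v_A[OF j] by (simp add: inf_commute)
  then have "Zop (v j) (e m) = (\<lambda>z. (-1) ^ card (lx u m k \<inter> v j) * e m z)"
    unfolding e_def using Zop_cw[OF v_sub[OF j]] lx_fin by blast
  moreover have "odd (card (lx u m k \<inter> v j)) \<longleftrightarrow> j \<in> m" using lx_pair[OF j] by (simp add: inf_commute)
  ultimately show ?thesis by (auto simp: fun_eq_iff)
qed

end

context cssL begin

lemma Q_states: "\<chi> \<in> Q \<Longrightarrow> \<not> y \<subseteq> {0..<n} \<Longrightarrow> \<chi> y = 0"
  by (auto simp: codespace_def states_def)
lemma Q_X: "\<chi> \<in> Q \<Longrightarrow> a \<in> A \<Longrightarrow> \<chi> (sdiff y a) = \<chi> y"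
  by (auto simp: codespace_def Xop_fix_iff)
lemma Q_Z: "\<chi> \<in> Q \<Longrightarrow> b \<in> B \<Longrightarrow> odd (card (y \<inter> b)) \<Longrightarrow> \<chi> y = 0"
  by (auto simp: codespace_def Zop_fix_iff)

lemma Q_zero: assumes "\<chi> \<in> Q" "y \<notin> perp n B" shows "\<chi> y = 0"
proof (cases "y \<subseteq> {0..<n}")
  case True
  then obtain b where "b \<in> B" "odd (card (b \<inter> y))" using assms(2) by (auto simp: perp_def)
  then show ?thesis using Q_Z[OF assms(1)] by (simp add: Int_commute)
next
  case False then show ?thesis using Q_states[OF assms(1)] by blast
qed

lemma perp_decomp: assumes y: "y \<in> perp n B" shows "\<exists>m\<subseteq>{0..<k}. sdiff (lx u m k) y \<in> A"
proof -
  define S where "S = (\<Union>m\<in>Pow {0..<k}. sdiff (lx u m k) ` A)"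
  have PB: "f2_subspace n (perp n B)" by (rule perp_subspace[OF subB])
  have SP: "S \<subseteq> perp n B"
    unfolding S_def using subsp_sdiff[OF PB] lx_perp[of k] A_perp by blast
  have finA: "finite A" by (rule subsp_finite[OF subA])
  have cS: "card S = (\<Sum>m\<in>Pow {0..<k}. card (sdiff (lx u m k) ` A))"
    unfolding S_def
  proof (rule card_UN_disjoint)
    show "finite (Pow {0..<k})" by simp
    show "\<forall>m\<in>Pow {0..<k}. finite (sdiff (lx u m k) ` A)" using finA by blast
    show "\<forall>m\<in>Pow {0..<k}. \<forall>m'\<in>Pow {0..<k}. m \<noteq> m' \<longrightarrow> sdiff (lx u m k) ` A \<inter> sdiff (lx u m' k) ` A = {}"
    proof (intro ballI impI)
      fix m m' assume m: "m \<in> Pow {0..<k}" and m': "m' \<in> Pow {0..<k}" and ne: "m \<noteq> m'"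
      show "sdiff (lx u m k) ` A \<inter> sdiff (lx u m' k) ` A = {}"
      proof (rule ccontr)
        assume "sdiff (lx u m k) ` A \<inter> sdiff (lx u m' k) ` A \<noteq> {}"
        then obtain a a' where aa: "a \<in> A" "a' \<in> A" "sdiff (lx u m k) a = sdiff (lx u m' k) a'" by blast
        have "sdiff (lx u m k) (lx u m' k) = sdiff a a'"
        proof -
          have "sdiff (lx u m k) (lx u m' k) = sdiff (sdiff (lx u m k) a) (sdiff (lx u m' k) a) " by auto
          also have "\<dots> = sdiff (sdiff (lx u m' k) a') (sdiff (lx u m' k) a)" using aa(3) by simp
          also have "\<dots> = sdiff a a'" by auto
          finally show ?thesis .
        qed
        then have "sdiff (lx u m k) (lx u m' k) \<in> A" using subsp_sdiff[OF subA aa(1,2)] by simp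
        then show False using lx_inj m m' ne by auto
      qed
    qed
  qed
  also have "\<dots> = (\<Sum>m\<in>Pow {0..<k}. card A)"
  proof (rule sum.cong)
    fix m
    have "inj_on (sdiff (lx u m k)) A" by (rule inj_onI) (metis sdiff_cancel(1))
    then show "card (sdiff (lx u m k) ` A) = card A" by (rule card_image)
  qed simp
  also have "\<dots> = 2 ^ k * card A" by (simp add: card_Pow)
  finally have cS2: "card S = 2 ^ k * card A" .
  obtain dP where dP: "card (perp n B) = 2 ^ dP" using subsp_pow2[OF PB] by blast
  have cA: "card A = 2 ^ dimF2 A" by (rule dimF2[OF subA])
  have cB: "card B = 2 ^ dimF2 B" by (rule dimF2[OF subB])
  have "2 ^ dimF2 B * 2 ^ dP = (2::nat) ^ n" using card_perp[OF subB] cB dP by simp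
  then have "(2::nat) ^ (dimF2 B + dP) = 2 ^ n" by (simp add: power_add)
  then have nB: "dimF2 B + dP = n" using power_inject_exp[of 2] by (metis one_less_numeral_iff semiring_norm(76))
  have finP: "finite (perp n B)" using subsp_finite[OF PB] .
  have "A \<subseteq> perp n B" using A_perp by blast
  then have "card A \<le> card (perp n B)" using card_mono[OF finP] by blast
  then have "(2::nat) ^ dimF2 A \<le> 2 ^ dP" using cA dP by simp
  then have dA: "dimF2 A \<le> dP" by simp
  have kk: "k = dP - dimF2 A" unfolding num_logical_def using nB by simp
  have "card S = 2 ^ (dP - dimF2 A) * 2 ^ dimF2 A" using cS2 kk cA by simp
  also have "\<dots> = 2 ^ dP" using dA by (simp add: power_add[symmetric])
  finally have "card S = card (perp n B)" using dP by simp
  then have "S = perp n B" using card_subset_eq[OF finP SP] by blast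
  then have "y \<in> S" using y by simp
  then obtain m a where m: "m \<in> Pow {0..<k}" "a \<in> A" "y = sdiff (lx u m k) a" unfolding S_def by blast
  then have "sdiff (lx u m k) y = a" by simp
  then show ?thesis using m by blast
qed

lemma Q_expand: assumes chi: "\<chi> \<in> Q"
  shows "\<chi> = (\<lambda>y. \<Sum>m\<in>Pow {0..<k}. \<chi> (lx u m k) * e m y)"
proof
  fix y
  show "\<chi> y = (\<Sum>m\<in>Pow {0..<k}. \<chi> (lx u m k) * e m y)"
  proof (cases "y \<in> perp n B")
    case False
    have "\<chi> y = 0" using Q_zero[OF chi False] .
    moreover have "e m y = 0" for m using Q_zero[OF e_in_Q False] .
    ultimately show ?thesis by simp
  next
    case True
    obtain m0 where m0: "m0 \<subseteq> {0..<k}" "sdiff (lx u m0 k) y \<in> A" using perp_decomp[OF True] by blast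
    have ey: "e m y = (if m = m0 then 1 else 0)" if m: "m \<in> Pow {0..<k}" for m
    proof (cases "sdiff (lx u m k) y \<in> A")
      case True
      have "sdiff (lx u m k) (lx u m0 k) = sdiff (sdiff (lx u m k) y) (sdiff (lx u m0 k) y)" by auto
      then have "sdiff (lx u m k) (lx u m0 k) \<in> A" using subsp_sdiff[OF subA True m0(2)] by simp
      then have "m = m0" using lx_inj m m0(1) by auto
      then show ?thesis using True by (simp add: e_def cw_def)
    next
      case False
      then have "m \<noteq> m0" using m0 by auto
      then show ?thesis using False by (simp add: e_def cw_def)
    qed
    have "(\<Sum>m\<in>Pow {0..<k}. \<chi> (lx u m k) * e m y) = (\<Sum>m\<in>Pow {0..<k}. if m = m0 then \<chi> (lx u m k) else 0)"
      by (rule sum.cong) (auto simp: ey)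
    also have "\<dots> = \<chi> (lx u m0 k)" using m0(1) by simp
    also have "\<dots> = \<chi> (sdiff y (sdiff (lx u m0 k) y))"
    proof -
      have "sdiff y (sdiff (lx u m0 k) y) = lx u m0 k" by auto
      then show ?thesis by simp
    qed
    also have "\<dots> = \<chi> y" by (rule Q_X[OF chi m0(2)])
    finally show ?thesis by simp
  qed
qed

end

lemma sum4: "(\<Sum>c\<in>{0..<4::nat}. f c) = f 0 + f 1 + f 2 + (f 3 :: 'a::comm_monoid_add)"
  by (simp add: eval_nat_numeral atLeast0_lessThan_Suc add.commute add.left_commute)

lemma pauli_orth1: "(\<Sum>c\<in>{0..<4::nat}. cnj (pauli1 c a b) * pauli1 c a' b') = (if a = a' \<and> b = b' then 2 else 0)"
  unfolding sum4 by (cases a; cases b; cases a'; cases b') (simp_all add: pauli1_def)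

lemma pstr_orth:
  assumes "x \<subseteq> {0..<k}" "y \<subseteq> {0..<k}" "m' \<subseteq> {0..<k}" "m \<subseteq> {0..<k}"
  shows "(\<Sum>s\<in>pauli_strings k. cnj (pstr k s x y) * pstr k s m' m) = (if x = m' \<and> y = m then 2 ^ k else 0)"
proof -
  have "(\<Sum>s\<in>pauli_strings k. cnj (pstr k s x y) * pstr k s m' m) =
        (\<Sum>s\<in>PiE {..<k} (\<lambda>_. {0..<4}). \<Prod>j\<in>{..<k}. cnj (pauli1 (s j) (j \<in> x) (j \<in> y)) * pauli1 (s j) (j \<in> m') (j \<in> m))"
    unfolding pauli_strings_def pstr_def atLeast0LessThan by (simp add: prod.distrib)
  also have "\<dots> = (\<Prod>j\<in>{..<k}. \<Sum>c\<in>{0..<4}. cnj (pauli1 c (j \<in> x) (j \<in> y)) * pauli1 c (j \<in> m') (j \<in> m))"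
    by (rule prod_sum_PiE[symmetric]) auto
  also have "\<dots> = (\<Prod>j\<in>{..<k}. if (j \<in> x) = (j \<in> m') \<and> (j \<in> y) = (j \<in> m) then 2 else 0)"
    by (simp add: pauli_orth1)
  also have "\<dots> = (if x = m' \<and> y = m then 2 ^ k else 0)"
  proof (cases "x = m' \<and> y = m")
    case True then show ?thesis by simp
  next
    case False
    have "\<exists>j. j \<in> {..<k} \<and> \<not> ((j \<in> x) = (j \<in> m') \<and> (j \<in> y) = (j \<in> m))"
    proof -
      from False consider "x \<noteq> m'" | "y \<noteq> m" by blast
      then show ?thesis
      proof cases
        case 1
        then obtain j where "(j \<in> x) \<noteq> (j \<in> m')" by blast
        moreover then have "j < k" using assms by auto
        ultimately show ?thesis by auto
      next
        case 2
        then obtain j where "(j \<in> y) \<noteq> (j \<in> m)" by blast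
        moreover then have "j < k" using assms by auto
        ultimately show ?thesis by auto
      qed
    qed
    then obtain j where "j \<in> {..<k}" "\<not> ((j \<in> x) = (j \<in> m') \<and> (j \<in> y) = (j \<in> m))" by blast
    then show ?thesis using False by (intro prod_zero[THEN trans]) auto
  qed
  finally show ?thesis .
qed

lemma pauli_expand:
  assumes "m' \<subseteq> {0..<k}" "m \<subseteq> {0..<k}"
  shows "(\<Sum>s\<in>pauli_strings k. pcoef k W s * pstr k s m' m) = W m' m"
proof -
  have "(\<Sum>s\<in>pauli_strings k. pcoef k W s * pstr k s m' m) =
     (\<Sum>s\<in>pauli_strings k. \<Sum>x\<in>Pow {0..<k}. \<Sum>y\<in>Pow {0..<k}. W x y * (cnj (pstr k s x y) * pstr k s m' m) / 2 ^ k)"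
  proof (rule sum.cong)
    fix s
    have "pcoef k W s * pstr k s m' m = (\<Sum>x\<in>Pow {0..<k}. \<Sum>y\<in>Pow {0..<k}. cnj (pstr k s x y) * W x y) * pstr k s m' m / 2 ^ k"
      unfolding pcoef_def by simp
    also have "\<dots> = (\<Sum>x\<in>Pow {0..<k}. \<Sum>y\<in>Pow {0..<k}. cnj (pstr k s x y) * W x y * pstr k s m' m) / 2 ^ k"
      by (simp only: sum_distrib_right)
    also have "\<dots> = (\<Sum>x\<in>Pow {0..<k}. \<Sum>y\<in>Pow {0..<k}. W x y * (cnj (pstr k s x y) * pstr k s m' m) / 2 ^ k)"
      by (simp only: sum_divide_distrib mult_ac)
    finally show "pcoef k W s * pstr k s m' m = (\<Sum>x\<in>Pow {0..<k}. \<Sum>y\<in>Pow {0..<k}. W x y * (cnj (pstr k s x y) * pstr k s m' m) / 2 ^ k)" .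
  qed simp
  also have "\<dots> = (\<Sum>x\<in>Pow {0..<k}. \<Sum>y\<in>Pow {0..<k}. W x y * (\<Sum>s\<in>pauli_strings k. cnj (pstr k s x y) * pstr k s m' m) / 2 ^ k)"
    by (simp add: sum.swap[of _ "pauli_strings k"] sum_distrib_left sum_divide_distrib)
  also have "\<dots> = (\<Sum>x\<in>Pow {0..<k}. \<Sum>y\<in>Pow {0..<k}. if x = m' \<and> y = m then W x y else 0)"
    by (intro sum.cong refl) (simp add: pstr_orth assms)
  also have "\<dots> = (\<Sum>x\<in>Pow {0..<k}. if x = m' then W m' m else 0)"
  proof (rule sum.cong)
    fix x show "(\<Sum>y\<in>Pow {0..<k}. if x = m' \<and> y = m then W x y else 0) = (if x = m' then W m' m else 0)"
      using assms by (cases "x = m'") simp_all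
  qed simp
  also have "\<dots> = W m' m" using assms by simp
  finally show ?thesis .
qed

lemma lpauli1_scale: "lpauli1 a b c (\<lambda>x. d * \<phi> x) = (\<lambda>x. d * lpauli1 a b c \<phi> x)"
  by (auto simp: lpauli1_def Xop_def Zop_def fun_eq_iff mult_ac)

lemma lpauli_scale: "lpauli u v s j (\<lambda>x. d * \<phi> x) = (\<lambda>x. d * lpauli u v s j \<phi> x)"
proof (induction j arbitrary: \<phi>)
  case 0 then show ?case by simp
next
  case (Suc j) then show ?case by (simp add: lpauli1_scale)
qed

definition flipset :: "(nat \<Rightarrow> nat) \<Rightarrow> nat \<Rightarrow> nat set" where
  "flipset s j = {i. i < j \<and> (s i = 1 \<or> s i = 2)}"

context cssL begin

lemma lpauli1_e: assumes j: "j < k"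
  shows "lpauli1 (u j) (v j) c (e m) =
     (\<lambda>x. pauli1 c (j \<in> (if c = 1 \<or> c = 2 then sdiff m {j} else m)) (j \<in> m) *
           e (if c = 1 \<or> c = 2 then sdiff m {j} else m) x)"
proof -
  have X: "Xop (u j) (\<lambda>z. d * e m z) = (\<lambda>x. d * e (sdiff m {j}) x)" for d
    using Xop_e[OF j, of m] by (auto simp: Xop_def fun_eq_iff)
  consider "c = 1" | "c = 2" | "c = 3" | "c \<notin> {1,2,3}" by auto
  then show ?thesis
  proof cases
    case 1 then show ?thesis by (simp add: lpauli1_def Xop_e[OF j] pauli1_def)
  next
    case 2 then show ?thesis by (simp add: lpauli1_def Zop_e[OF j] X pauli1_def fun_eq_iff)
  next
    case 3 then show ?thesis by (simp add: lpauli1_def Zop_e[OF j] pauli1_def fun_eq_iff)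
  next
    case 4 then show ?thesis by (simp add: lpauli1_def pauli1_def)
  qed
qed

lemma lpauli_e: "j \<le> k \<Longrightarrow> lpauli u v s j (e m) =
   (\<lambda>x. (\<Prod>i<j. pauli1 (s i) (i \<in> sdiff m (flipset s j)) (i \<in> m)) * e (sdiff m (flipset s j)) x)"
proof (induction j arbitrary: m)
  case 0 then show ?case by (simp add: flipset_def)
next
  case (Suc j)
  define m' where "m' = (if s j = 1 \<or> s j = 2 then sdiff m {j} else m)"
  have jk: "j < k" using Suc.prems by simp
  have F: "sdiff m' (flipset s j) = sdiff m (flipset s (Suc j))"
    unfolding m'_def flipset_def by (auto simp: less_Suc_eq)
  have same: "i < j \<Longrightarrow> (i \<in> m') = (i \<in> m)" for i unfolding m'_def by auto
  have jm: "(j \<in> sdiff m (flipset s (Suc j))) = (j \<in> m')"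
    unfolding m'_def flipset_def by auto
  have "lpauli u v s (Suc j) (e m) = lpauli u v s j (lpauli1 (u j) (v j) (s j) (e m))" by simp
  also have "\<dots> = lpauli u v s j (\<lambda>x. pauli1 (s j) (j \<in> m') (j \<in> m) * e m' x)"
    unfolding lpauli1_e[OF jk] m'_def by simp
  also have "\<dots> = (\<lambda>x. pauli1 (s j) (j \<in> m') (j \<in> m) * lpauli u v s j (e m') x)"
    by (rule lpauli_scale)
  also have "\<dots> = (\<lambda>x. pauli1 (s j) (j \<in> m') (j \<in> m) *
      ((\<Prod>i<j. pauli1 (s i) (i \<in> sdiff m' (flipset s j)) (i \<in> m')) * e (sdiff m' (flipset s j)) x))"
    using Suc.IH[of m'] Suc.prems by simp
  also have "\<dots> = (\<lambda>x. (\<Prod>i<Suc j. pauli1 (s i) (i \<in> sdiff m (flipset s (Suc j))) (i \<in> m)) * e (sdiff m (flipset s (Suc j))) x)"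
  proof -
    have pe: "(\<Prod>i<j. pauli1 (s i) (i \<in> sdiff m (flipset s (Suc j))) (i \<in> m)) =
          (\<Prod>i<j. pauli1 (s i) (i \<in> sdiff m' (flipset s j)) (i \<in> m'))"
      by (rule prod.cong) (auto simp: F same)
    have P: "(\<Prod>i<Suc j. pauli1 (s i) (i \<in> sdiff m (flipset s (Suc j))) (i \<in> m)) =
       (\<Prod>i<j. pauli1 (s i) (i \<in> sdiff m' (flipset s j)) (i \<in> m')) * pauli1 (s j) (j \<in> m') (j \<in> m)"
      by (simp only: prod.lessThan_Suc jm pe)
    show ?thesis unfolding P F by (simp add: mult_ac)
  qed
  finally show ?case .
qed

lemma lpauli_e_sum: assumes m: "m \<subseteq> {0..<k}"
  shows "lpauli u v s k (e m) = (\<lambda>x. \<Sum>m'\<in>Pow {0..<k}. pstr k s m' m * e m' x)"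
proof
  fix x
  define F where "F = sdiff m (flipset s k)"
  have Fs: "F \<subseteq> {0..<k}" unfolding F_def flipset_def using m by auto
  have z: "pstr k s m' m = 0" if "m' \<subseteq> {0..<k}" "m' \<noteq> F" for m'
  proof -
    from that(2) obtain i where i0: "(i \<in> m') \<noteq> (i \<in> F)" by blast
    then have "i < k" using that(1) Fs by auto
    with i0 have i: "i < k" "(i \<in> m') \<noteq> (i \<in> F)" by auto
    have h: "pauli1 (s i) (i \<in> m') (i \<in> m) = 0"
      using i unfolding F_def flipset_def by (auto simp: pauli1_def)
    show ?thesis unfolding pstr_def
    proof (rule prod_zero)
      show "\<exists>a\<in>{..<k}. pauli1 (s a) (a \<in> m') (a \<in> m) = 0" using h i(1) by blast
    qed simp
  qed
  have "(\<Sum>m'\<in>Pow {0..<k}. pstr k s m' m * e m' x) = (\<Sum>m'\<in>Pow {0..<k}. if m' = F then pstr k s F m * e F x else 0)"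
    by (rule sum.cong) (auto simp: z)
  also have "\<dots> = pstr k s F m * e F x" using Fs by simp
  finally show "lpauli u v s k (e m) x = (\<Sum>m'\<in>Pow {0..<k}. pstr k s m' m * e m' x)"
    using lpauli_e[of k s m] by (simp add: F_def pstr_def)
qed

lemma action_e:
  assumes act: "has_logical_action n A B u v G W" and m: "m \<subseteq> {0..<k}"
  shows "G (e m) = (\<lambda>x. \<Sum>m'\<in>Pow {0..<k}. W m' m * e m' x)"
proof
  fix x
  have "G (e m) x = (\<Sum>s\<in>pauli_strings k. pcoef k W s * lpauli u v s k (e m) x)"
    using act e_in_Q unfolding has_logical_action_def Let_def by metis
  also have "\<dots> = (\<Sum>s\<in>pauli_strings k. \<Sum>m'\<in>Pow {0..<k}. pcoef k W s * pstr k s m' m * e m' x)"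
    by (simp add: lpauli_e_sum[OF m] sum_distrib_left mult_ac)
  also have "\<dots> = (\<Sum>m'\<in>Pow {0..<k}. (\<Sum>s\<in>pauli_strings k. pcoef k W s * pstr k s m' m) * e m' x)"
    by (simp add: sum.swap[of _ "pauli_strings k"] sum_distrib_right)
  also have "\<dots> = (\<Sum>m'\<in>Pow {0..<k}. W m' m * e m' x)"
    by (rule sum.cong) (auto simp: pauli_expand m)
  finally show "G (e m) x = (\<Sum>m'\<in>Pow {0..<k}. W m' m * e m' x)" .
qed

end

lemma mmult1_expand: "mmult1 f g a b = f a False * g False b + f a True * g True b"
  by (simp add: mmult1_def UNIV_bool add.commute)

lemma mmult1_assoc: "mmult1 (mmult1 f g) h = mmult1 f (mmult1 g h)"
  by (auto simp: fun_eq_iff mmult1_expand algebra_simps)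

lemma mmult1_I_left[simp]: "mmult1 (pauli1 0) g = g"
  by (auto simp: fun_eq_iff mmult1_expand pauli1_def)
lemma mmult1_I_right[simp]: "mmult1 g (pauli1 0) = g"
  by (auto simp: fun_eq_iff mmult1_expand pauli1_def)

lemma mmult1_scale_left: "mmult1 (\<lambda>a b. c * f a b) g = (\<lambda>a b. c * mmult1 f g a b)"
  by (auto simp: fun_eq_iff mmult1_expand algebra_simps)
lemma mmult1_scale_right: "mmult1 f (\<lambda>a b. c * g a b) = (\<lambda>a b. c * mmult1 f g a b)"
  by (auto simp: fun_eq_iff mmult1_expand algebra_simps)

lemma unitary_left: assumes "unitary1 g" shows "mmult1 (adj1 g) g = pauli1 0"
proof -
  have h: "mmult1 g (adj1 g) a b = pauli1 0 a b" for a b using assms unfolding unitary1_def by simp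
  define g00 where "g00 = g False False"
  define g01 where "g01 = g False True"
  define g10 where "g10 = g True False"
  define g11 where "g11 = g True True"
  have e1: "g00 * cnj g00 + g01 * cnj g01 = 1" using h[of False False]
    by (simp add: mmult1_expand adj1_def pauli1_def g00_def g01_def)
  have e2: "g00 * cnj g10 + g01 * cnj g11 = 0" using h[of False True]
    by (simp add: mmult1_expand adj1_def pauli1_def g00_def g01_def g10_def g11_def)
  have e3: "g10 * cnj g00 + g11 * cnj g01 = 0" using h[of True False]
    by (simp add: mmult1_expand adj1_def pauli1_def g00_def g01_def g10_def g11_def)
  have e4: "g10 * cnj g10 + g11 * cnj g11 = 1" using h[of True True]
    by (simp add: mmult1_expand adj1_def pauli1_def g10_def g11_def)
  have f1: "cnj g00 * g00 + cnj g10 * g10 = 1" using e1 e2 e3 e4 by algebra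
  have f2: "cnj g00 * g01 + cnj g10 * g11 = 0" using e1 e2 e3 e4 by algebra
  have f3: "cnj g01 * g00 + cnj g11 * g10 = 0" using e1 e2 e3 e4 by algebra
  have f4: "cnj g01 * g01 + cnj g11 * g11 = 1" using e1 e2 e3 e4 by algebra
  show ?thesis
  proof (intro ext)
    fix a b show "mmult1 (adj1 g) g a b = pauli1 0 a b"
      using f1 f2 f3 f4
      by (cases a; cases b) (simp_all add: mmult1_expand adj1_def pauli1_def g00_def g01_def g10_def g11_def)
  qed
qed

lemma conj_back: assumes "unitary1 g"
  shows "mmult1 (adj1 g) (mmult1 (mmult1 g M) (adj1 g)) = mmult1 M (adj1 g)"
    and "mmult1 (mmult1 (mmult1 g M) (adj1 g)) g = mmult1 g M"
  using unitary_left[OF assms]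
  by (simp_all add: mmult1_assoc[symmetric]) (simp add: mmult1_assoc)

lemma conj_back2: assumes "unitary1 g"
  shows "mmult1 (mmult1 (adj1 g) (mmult1 (mmult1 g M) (adj1 g))) g = M"
proof -
  have "mmult1 (mmult1 (adj1 g) (mmult1 (mmult1 g M) (adj1 g))) g = mmult1 (mmult1 M (adj1 g)) g"
    using conj_back(1)[OF assms] by simp
  also have "\<dots> = M" using unitary_left[OF assms] by (simp add: mmult1_assoc)
  finally show ?thesis .
qed

lemma pauli_in_group: "j < 4 \<Longrightarrow> pauli1 j \<in> pauli_group1"
  unfolding pauli_group1_def by (rule CollectI, rule exI[of _ 1], rule exI[of _ j]) auto

lemma cliff_img: assumes "clifford1 g" "P \<in> {1,3}"
  shows "\<exists>c p. c \<in> {1, -1, \<i>, - \<i>} \<and> p \<in> {1,2,3} \<and>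
     mmult1 (mmult1 g (pauli1 P)) (adj1 g) = (\<lambda>a b. c * pauli1 p a b)"
proof -
  have u: "unitary1 g" using assms(1) by (simp add: clifford1_def)
  have "mmult1 (mmult1 g (pauli1 P)) (adj1 g) \<in> pauli_group1"
    using assms pauli_in_group[of P] by (auto simp: clifford1_def)
  then obtain c j where cj: "c \<in> {1, -1, \<i>, - \<i>}" "j < 4"
     "mmult1 (mmult1 g (pauli1 P)) (adj1 g) = (\<lambda>a b. c * pauli1 j a b)"
    unfolding pauli_group1_def by blast
  have "j \<noteq> 0"
  proof
    assume j0: "j = 0"
    have "pauli1 P = mmult1 (mmult1 (adj1 g) (mmult1 (mmult1 g (pauli1 P)) (adj1 g))) g"
      using conj_back2[OF u] by simp
    also have "\<dots> = (\<lambda>a b. c * pauli1 0 a b)"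
      unfolding cj(3) j0 by (simp add: mmult1_scale_left mmult1_scale_right unitary_left[OF u])
    finally have "pauli1 P False True = c * pauli1 0 False True" "pauli1 P False False = c * pauli1 0 False False"
       "pauli1 P True True = c * pauli1 0 True True"
      by metis+
    then show False using assms(2) cj(1) by (auto simp: pauli1_def)
  qed
  then show ?thesis using cj by (intro exI[of _ c] exI[of _ j]) auto
qed

lemma cliff_distinct: assumes u: "unitary1 g"
  and x: "mmult1 (mmult1 g (pauli1 1)) (adj1 g) = (\<lambda>a b. c * pauli1 p a b)"
  and z: "mmult1 (mmult1 g (pauli1 3)) (adj1 g) = (\<lambda>a b. c' * pauli1 p' a b)"
  and c: "c' \<noteq> 0"
  shows "p \<noteq> p'"
proof
  assume pp: "p = p'"
  have "pauli1 1 = mmult1 (mmult1 (adj1 g) (\<lambda>a b. c * pauli1 p a b)) g"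
    using conj_back2[OF u, of "pauli1 1"] x by simp
  then have X: "pauli1 1 = (\<lambda>a b. c * mmult1 (mmult1 (adj1 g) (pauli1 p)) g a b)"
    by (simp add: mmult1_scale_left mmult1_scale_right)
  have "pauli1 3 = mmult1 (mmult1 (adj1 g) (\<lambda>a b. c' * pauli1 p a b)) g"
    using conj_back2[OF u, of "pauli1 3"] z pp by simp
  then have Z: "pauli1 3 = (\<lambda>a b. c' * mmult1 (mmult1 (adj1 g) (pauli1 p)) g a b)"
    by (simp add: mmult1_scale_left mmult1_scale_right)
  define M where "M = mmult1 (mmult1 (adj1 g) (pauli1 p)) g"
  have "pauli1 1 False True = c * M False True" "pauli1 3 False True = c' * M False True"
       "pauli1 3 False False = c' * M False False" "pauli1 1 False False = c * M False False"
    using X Z unfolding M_def by metis+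
  then show False using c by (auto simp: pauli1_def)
qed

lemma circuit_states: "circuit n g \<psi> \<in> states n"
  by (auto simp: circuit_def states_def)

lemma circuit_cong: assumes h: "\<And>i. i < n \<Longrightarrow> g i = g' i" shows "circuit n g = circuit n g'"
proof -
  have eq: "\<And>x y. (\<Prod>i<n. g i (i \<in> x) (i \<in> y)) = (\<Prod>i<n. g' i (i \<in> x) (i \<in> y))"
    by (rule prod.cong) (auto simp: h)
  show ?thesis
  proof (intro ext)
    fix \<psi> x show "circuit n g \<psi> x = circuit n g' \<psi> x" unfolding circuit_def eq ..
  qed
qed

lemma circuit_comp: assumes \<psi>: "\<psi> \<in> states n"
  shows "circuit n f (circuit n g \<psi>) = circuit n (\<lambda>i. mmult1 (f i) (g i)) \<psi>"
proof
  fix x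
  show "circuit n f (circuit n g \<psi>) x = circuit n (\<lambda>i. mmult1 (f i) (g i)) \<psi> x"
  proof (cases "x \<subseteq> {0..<n}")
    case False then show ?thesis by (simp add: circuit_def)
  next
    case True
    have "circuit n f (circuit n g \<psi>) x =
      (\<Sum>y\<in>Pow {0..<n}. (\<Prod>i<n. f i (i \<in> x) (i \<in> y)) * (\<Sum>z\<in>Pow {0..<n}. (\<Prod>i<n. g i (i \<in> y) (i \<in> z)) * \<psi> z))"
      using True by (simp add: circuit_def)
    also have "\<dots> = (\<Sum>y\<in>Pow {0..<n}. \<Sum>z\<in>Pow {0..<n}. (\<Prod>i<n. f i (i \<in> x) (i \<in> y)) * ((\<Prod>i<n. g i (i \<in> y) (i \<in> z)) * \<psi> z))"
      by (simp only: sum_distrib_left)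
    also have "\<dots> = (\<Sum>z\<in>Pow {0..<n}. \<Sum>y\<in>Pow {0..<n}. (\<Prod>i<n. f i (i \<in> x) (i \<in> y)) * ((\<Prod>i<n. g i (i \<in> y) (i \<in> z)) * \<psi> z))"
      by (rule sum.swap)
    also have "\<dots> = (\<Sum>z\<in>Pow {0..<n}. (\<Sum>y\<in>Pow {0..<n}. (\<Prod>i<n. f i (i \<in> x) (i \<in> y)) * (\<Prod>i<n. g i (i \<in> y) (i \<in> z))) * \<psi> z)"
      by (simp only: sum_distrib_right mult.assoc)
    also have "\<dots> = (\<Sum>z\<in>Pow {0..<n}. (\<Sum>y\<in>Pow {0..<n}. \<Prod>i<n. f i (i \<in> x) (i \<in> y) * g i (i \<in> y) (i \<in> z)) * \<psi> z)"
      by (simp only: prod.distrib)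
    also have "\<dots> = (\<Sum>z\<in>Pow {0..<n}. (\<Prod>i<n. mmult1 (f i) (g i) (i \<in> x) (i \<in> z)) * \<psi> z)"
    proof (rule sum.cong)
      fix z
      show "(\<Sum>y\<in>Pow {0..<n}. \<Prod>i<n. f i (i \<in> x) (i \<in> y) * g i (i \<in> y) (i \<in> z)) * \<psi> z =
            (\<Prod>i<n. mmult1 (f i) (g i) (i \<in> x) (i \<in> z)) * \<psi> z"
        by (subst sum_pow_prod[where F="\<lambda>i b. f i (i \<in> x) b * g i b (i \<in> z)"]) (simp add: mmult1_expand)
    qed simp
    also have "\<dots> = circuit n (\<lambda>i. mmult1 (f i) (g i)) \<psi> x" using True by (simp add: circuit_def)
    finally show ?thesis .
  qed
qed

lemma circuit_scale_gates: "circuit n (\<lambda>i a b. c i * h i a b) \<psi> = (\<lambda>x. (\<Prod>i<n. c i) * circuit n h \<psi> x)"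
  by (auto simp: circuit_def fun_eq_iff prod.distrib sum_distrib_left mult_ac)

lemma circuit_scale: "circuit n g (\<lambda>x. c * \<phi> x) = (\<lambda>x. c * circuit n g \<phi> x)"
  by (auto simp: circuit_def fun_eq_iff sum_distrib_left mult_ac)

lemma circuit_lin: "circuit n g (\<lambda>x. \<Sum>m\<in>M. c m * \<phi> m x) = (\<lambda>x. \<Sum>m\<in>M. c m * circuit n g (\<phi> m) x)"
proof
  fix x
  show "circuit n g (\<lambda>x. \<Sum>m\<in>M. c m * \<phi> m x) x = (\<Sum>m\<in>M. c m * circuit n g (\<phi> m) x)"
  proof (cases "x \<subseteq> {0..<n}")
    case True
    have "(\<Sum>y\<in>Pow {0..<n}. (\<Prod>i<n. g i (i \<in> x) (i \<in> y)) * (\<Sum>m\<in>M. c m * \<phi> m y)) =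
          (\<Sum>y\<in>Pow {0..<n}. \<Sum>m\<in>M. c m * ((\<Prod>i<n. g i (i \<in> x) (i \<in> y)) * \<phi> m y))"
      by (simp only: sum_distrib_left mult.left_commute)
    also have "\<dots> = (\<Sum>m\<in>M. \<Sum>y\<in>Pow {0..<n}. c m * ((\<Prod>i<n. g i (i \<in> x) (i \<in> y)) * \<phi> m y))"
      by (rule sum.swap)
    also have "\<dots> = (\<Sum>m\<in>M. c m * (\<Sum>y\<in>Pow {0..<n}. (\<Prod>i<n. g i (i \<in> x) (i \<in> y)) * \<phi> m y))"
      by (simp only: sum_distrib_left)
    finally show ?thesis using True by (simp add: circuit_def)
  next
    case False then show ?thesis by (simp add: circuit_def)
  qed
qed

lemma prod_ind: "finite S \<Longrightarrow> (\<Prod>i\<in>S. if P i then (1::complex) else 0) = (if \<forall>i\<in>S. P i then 1 else 0)"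
  by (induction S rule: finite_induct) auto

lemma all_lt_iff: assumes "S \<subseteq> {0..<n}" "T \<subseteq> {0..<n}"
  shows "(\<forall>i\<in>{..<n}. (i \<in> S) = (i \<in> T)) \<longleftrightarrow> S = T"
proof
  assume h: "\<forall>i\<in>{..<n}. (i \<in> S) = (i \<in> T)"
  show "S = T"
  proof (rule set_eqI)
    fix i show "i \<in> S \<longleftrightarrow> i \<in> T"
    proof (cases "i < n")
      case True with h show ?thesis by blast
    next
      case False then have "i \<notin> S" "i \<notin> T" using assms by auto
      then show ?thesis by blast
    qed
  qed
qed auto

definition XG :: "nat set \<Rightarrow> nat \<Rightarrow> gate1" where "XG a i = (if i \<in> a then pauli1 1 else pauli1 0)"
definition ZG :: "nat set \<Rightarrow> nat \<Rightarrow> gate1" where "ZG b i = (if i \<in> b then pauli1 3 else pauli1 0)"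

lemma Xop_circuit: assumes \<psi>: "\<psi> \<in> states n" and a: "a \<subseteq> {0..<n}"
  shows "Xop a \<psi> = circuit n (XG a) \<psi>"
proof
  fix x
  show "Xop a \<psi> x = circuit n (XG a) \<psi> x"
  proof (cases "x \<subseteq> {0..<n}")
    case False
    then obtain i where i: "i \<in> x" "i \<notin> {0..<n}" by blast
    then have "i \<in> sdiff x a" using a by auto
    then have "\<not> sdiff x a \<subseteq> {0..<n}" using i by blast
    then show ?thesis using False \<psi> by (simp add: Xop_def circuit_def states_def)
  next
    case True
    have f: "(\<Prod>i<n. XG a i (i \<in> x) (i \<in> y)) = (if y = sdiff x a then 1 else 0)" if y: "y \<subseteq> {0..<n}" for y
    proof -
      have "(\<Prod>i<n. XG a i (i \<in> x) (i \<in> y)) = (\<Prod>i<n. if (i \<in> y) = ((i \<in> x) \<noteq> (i \<in> a)) then 1 else 0)"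
        by (rule prod.cong) (auto simp: XG_def pauli1_def)
      also have "\<dots> = (if \<forall>i\<in>{..<n}. (i \<in> y) = (i \<in> sdiff x a) then 1 else 0)"
        by (simp only: prod_ind[OF finite_lessThan] sdiff_mem)
      also have "(\<forall>i\<in>{..<n}. (i \<in> y) = (i \<in> sdiff x a)) \<longleftrightarrow> y = sdiff x a"
        by (rule all_lt_iff[OF y sdiff_subset[OF True a]])
      finally show ?thesis .
    qed
    have sx: "sdiff x a \<in> Pow {0..<n}" using sdiff_subset[OF True a] by simp
    have "circuit n (XG a) \<psi> x = (\<Sum>y\<in>Pow {0..<n}. (if y = sdiff x a then 1 else 0) * \<psi> y)"
      using True by (simp add: circuit_def f)
    also have "\<dots> = (\<Sum>y\<in>Pow {0..<n}. if y = sdiff x a then \<psi> (sdiff x a) else 0)"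
      by (rule sum.cong) auto
    also have "\<dots> = \<psi> (sdiff x a)" using sx by simp
    finally show ?thesis by (simp add: Xop_def)
  qed
qed

lemma Zop_circuit: assumes \<psi>: "\<psi> \<in> states n" and b: "b \<subseteq> {0..<n}"
  shows "Zop b \<psi> = circuit n (ZG b) \<psi>"
proof
  fix x
  show "Zop b \<psi> x = circuit n (ZG b) \<psi> x"
  proof (cases "x \<subseteq> {0..<n}")
    case False
    then show ?thesis using \<psi> by (simp add: Zop_def circuit_def states_def)
  next
    case True
    have f: "(\<Prod>i<n. ZG b i (i \<in> x) (i \<in> y)) = (if y = x then (-1) ^ card (x \<inter> b) else 0)" if y: "y \<subseteq> {0..<n}" for y
    proof -
      have "(\<Prod>i<n. ZG b i (i \<in> x) (i \<in> y)) =
          (\<Prod>i<n. (if i \<in> b \<and> i \<in> x then -1 else 1) * (if (i \<in> y) = (i \<in> x) then 1 else 0))"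
        by (rule prod.cong) (auto simp: ZG_def pauli1_def)
      also have "\<dots> = (\<Prod>i<n. (if i \<in> b \<and> i \<in> x then -1 else 1)) * (if \<forall>i\<in>{..<n}. (i \<in> y) = (i \<in> x) then 1 else 0)"
        by (simp only: prod.distrib prod_ind[OF finite_lessThan])
      also have "(\<Prod>i<n. (if i \<in> b \<and> i \<in> x then -1 else 1)) = ((-1::complex) ^ card (x \<inter> b))"
      proof -
        have "{i\<in>{..<n}. i \<in> b \<and> i \<in> x} = x \<inter> b" using True by auto
        then show ?thesis by (simp add: prod_if_const)
      qed
      also have "(\<forall>i\<in>{..<n}. (i \<in> y) = (i \<in> x)) \<longleftrightarrow> y = x" using y True by (rule all_lt_iff)
      finally show ?thesis by simp
    qed
    have "circuit n (ZG b) \<psi> x = (\<Sum>y\<in>Pow {0..<n}. (if y = x then (-1) ^ card (x \<inter> b) else 0) * \<psi> y)"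
      using True by (simp add: circuit_def f)
    also have "\<dots> = (\<Sum>y\<in>Pow {0..<n}. if y = x then (-1) ^ card (x \<inter> b) * \<psi> x else 0)"
      by (rule sum.cong) auto
    also have "\<dots> = (-1) ^ card (x \<inter> b) * \<psi> x" using True by simp
    finally show ?thesis by (simp add: Zop_def)
  qed
qed

lemma Xop_states: "\<psi> \<in> states n \<Longrightarrow> a \<subseteq> {0..<n} \<Longrightarrow> Xop a \<psi> \<in> states n"
  using Xop_circuit circuit_states by metis
lemma Zop_states: "\<psi> \<in> states n \<Longrightarrow> Zop b \<psi> \<in> states n"
  by (auto simp: Zop_def states_def)

lemma pauli1_decomp: "pauli1 c = (\<lambda>p q. (if c = 2 then \<i> else 1) *
   mmult1 (if c = 1 \<or> c = 2 then pauli1 1 else pauli1 0) (if c = 2 \<or> c = 3 then pauli1 3 else pauli1 0) p q)"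
  by (auto simp: fun_eq_iff mmult1_expand pauli1_def)

lemma pauli_circuit: assumes \<psi>: "\<psi> \<in> states n"
  shows "circuit n (\<lambda>i. pauli1 (c i)) \<psi> =
    (\<lambda>x. (\<Prod>i<n. if c i = 2 then \<i> else 1) * Xop {i. i < n \<and> (c i = 1 \<or> c i = 2)} (Zop {i. i < n \<and> (c i = 2 \<or> c i = 3)} \<psi>) x)"
proof -
  let ?F = "{i. i < n \<and> (c i = 1 \<or> c i = 2)}" and ?G = "{i. i < n \<and> (c i = 2 \<or> c i = 3)}"
  have G: "?G \<subseteq> {0..<n}" by auto
  have F: "?F \<subseteq> {0..<n}" by auto
  have g: "circuit n (\<lambda>i. pauli1 (c i)) = circuit n (\<lambda>i p q. (if c i = 2 then \<i> else 1) * mmult1 (XG ?F i) (ZG ?G i) p q)"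
    by (rule circuit_cong) (subst pauli1_decomp, auto simp: XG_def ZG_def)
  have "circuit n (\<lambda>i. mmult1 (XG ?F i) (ZG ?G i)) \<psi> = circuit n (XG ?F) (circuit n (ZG ?G) \<psi>)"
    by (rule circuit_comp[symmetric, OF \<psi>])
  also have "\<dots> = circuit n (XG ?F) (Zop ?G \<psi>)"
    by (simp only: Zop_circuit[OF \<psi> G])
  also have "\<dots> = Xop ?F (Zop ?G \<psi>)"
    by (simp only: Xop_circuit[OF Zop_states[OF \<psi>] F])
  finally show ?thesis unfolding g circuit_scale_gates by simp
qed

lemma cliff_data: assumes "one_local_clifford n g"
  shows "\<exists>cx px cz pz. \<forall>i<n. cx i \<noteq> 0 \<and> cz i \<noteq> 0 \<and> px i \<in> {1,2,3} \<and> pz i \<in> {1,2,3} \<and> px i \<noteq> pz i \<and>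
     mmult1 (mmult1 (g i) (pauli1 1)) (adj1 (g i)) = (\<lambda>a b. cx i * pauli1 (px i) a b) \<and>
     mmult1 (mmult1 (g i) (pauli1 3)) (adj1 (g i)) = (\<lambda>a b. cz i * pauli1 (pz i) a b)"
proof -
  have "\<forall>i. \<exists>q::complex \<times> nat \<times> complex \<times> nat. i < n \<longrightarrow> fst q \<noteq> 0 \<and> fst (snd (snd q)) \<noteq> 0 \<and>
      fst (snd q) \<in> {1,2,3} \<and> snd (snd (snd q)) \<in> {1,2,3} \<and> fst (snd q) \<noteq> snd (snd (snd q)) \<and>
     mmult1 (mmult1 (g i) (pauli1 1)) (adj1 (g i)) = (\<lambda>a b. fst q * pauli1 (fst (snd q)) a b) \<and>
     mmult1 (mmult1 (g i) (pauli1 3)) (adj1 (g i)) = (\<lambda>a b. fst (snd (snd q)) * pauli1 (snd (snd (snd q))) a b)"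
  proof
    fix i
    show "\<exists>q::complex \<times> nat \<times> complex \<times> nat. i < n \<longrightarrow> fst q \<noteq> 0 \<and> fst (snd (snd q)) \<noteq> 0 \<and>
      fst (snd q) \<in> {1,2,3} \<and> snd (snd (snd q)) \<in> {1,2,3} \<and> fst (snd q) \<noteq> snd (snd (snd q)) \<and>
     mmult1 (mmult1 (g i) (pauli1 1)) (adj1 (g i)) = (\<lambda>a b. fst q * pauli1 (fst (snd q)) a b) \<and>
     mmult1 (mmult1 (g i) (pauli1 3)) (adj1 (g i)) = (\<lambda>a b. fst (snd (snd q)) * pauli1 (snd (snd (snd q))) a b)"
    proof (cases "i < n")
      case False then show ?thesis by simp
    next
      case True
      then have c: "clifford1 (g i)" using assms by (simp add: one_local_clifford_def)
      obtain c1 p1 where 1: "c1 \<in> {1, -1, \<i>, - \<i>}" "p1 \<in> {1,2,3}"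
        "mmult1 (mmult1 (g i) (pauli1 1)) (adj1 (g i)) = (\<lambda>a b. c1 * pauli1 p1 a b)"
        using cliff_img[OF c, of 1] by auto
      obtain c3 p3 where 3: "c3 \<in> {1, -1, \<i>, - \<i>}" "p3 \<in> {1,2,3}"
        "mmult1 (mmult1 (g i) (pauli1 3)) (adj1 (g i)) = (\<lambda>a b. c3 * pauli1 p3 a b)"
        using cliff_img[OF c, of 3] by auto
      have c1: "c1 \<noteq> 0" "c3 \<noteq> 0" using 1(1) 3(1) by auto
      have "p1 \<noteq> p3" using cliff_distinct[OF _ 1(3) 3(3) c1(2)] c by (simp add: clifford1_def)
      then show ?thesis using 1 3 c1 by (intro exI[of _ "(c1, p1, c3, p3)"]) auto
    qed
  qed
  then obtain f where f: "\<forall>i. i < n \<longrightarrow> fst (f i) \<noteq> 0 \<and> fst (snd (snd (f i))) \<noteq> 0 \<and>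
      fst (snd (f i)) \<in> {1,2,3} \<and> snd (snd (snd (f i))) \<in> {1,2,3} \<and> fst (snd (f i)) \<noteq> snd (snd (snd (f i))) \<and>
     mmult1 (mmult1 (g i) (pauli1 1)) (adj1 (g i)) = (\<lambda>a b. fst (f i) * pauli1 (fst (snd (f i))) a b) \<and>
     mmult1 (mmult1 (g i) (pauli1 3)) (adj1 (g i)) = (\<lambda>a b. fst (snd (snd (f i))) * pauli1 (snd (snd (snd (f i)))) a b)"
    by (metis choice)
  show ?thesis
    by (rule exI[of _ "\<lambda>i. fst (f i)"], rule exI[of _ "\<lambda>i. fst (snd (f i))"],
        rule exI[of _ "\<lambda>i. fst (snd (snd (f i)))"], rule exI[of _ "\<lambda>i. snd (snd (snd (f i)))"]) (use f in auto)
qed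

lemma circ_comm:
  assumes u: "\<And>i. i < n \<Longrightarrow> unitary1 (g i)"
    and h: "\<And>i. i < n \<Longrightarrow> mmult1 (mmult1 (g i) (pauli1 P)) (adj1 (g i)) = (\<lambda>a b. c i * pauli1 (p i) a b)"
    and \<psi>: "\<psi> \<in> states n"
  shows "circuit n g (circuit n (\<lambda>i. if i \<in> a then pauli1 P else pauli1 0) \<psi>) =
    (\<lambda>x. (\<Prod>i<n. if i \<in> a then c i * (if p i = 2 then \<i> else 1) else 1) *
        Xop {i. i < n \<and> i \<in> a \<and> (p i = 1 \<or> p i = 2)} (Zop {i. i < n \<and> i \<in> a \<and> (p i = 2 \<or> p i = 3)} (circuit n g \<psi>)) x)"
proof -
  let ?d = "\<lambda>i. if i \<in> a then p i else 0"
  let ?c = "\<lambda>i. if i \<in> a then c i else 1"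
  have "circuit n g (circuit n (\<lambda>i. if i \<in> a then pauli1 P else pauli1 0) \<psi>) =
        circuit n (\<lambda>i. mmult1 (g i) (if i \<in> a then pauli1 P else pauli1 0)) \<psi>"
    by (rule circuit_comp[OF \<psi>])
  also have "\<dots> = circuit n (\<lambda>i. mmult1 (\<lambda>x y. ?c i * pauli1 (?d i) x y) (g i)) \<psi>"
  proof (rule fun_cong[where x=\<psi>], rule circuit_cong)
    fix i assume i: "i < n"
    show "mmult1 (g i) (if i \<in> a then pauli1 P else pauli1 0) = mmult1 (\<lambda>x y. ?c i * pauli1 (?d i) x y) (g i)"
    proof (cases "i \<in> a")
      case True
      have "mmult1 (g i) (pauli1 P) = mmult1 (mmult1 (mmult1 (g i) (pauli1 P)) (adj1 (g i))) (g i)"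
        using conj_back(2)[OF u[OF i]] by simp
      then show ?thesis using True h[OF i] by simp
    next
      case False
      have "(\<lambda>x y. 1 * pauli1 0 x y) = pauli1 0" by simp
      then show ?thesis using False by simp
    qed
  qed
  also have "\<dots> = circuit n (\<lambda>i x y. ?c i * pauli1 (?d i) x y) (circuit n g \<psi>)"
    by (rule circuit_comp[symmetric, OF \<psi>])
  also have "\<dots> = (\<lambda>x. (\<Prod>i<n. ?c i) * circuit n (\<lambda>i. pauli1 (?d i)) (circuit n g \<psi>) x)"
    by (rule circuit_scale_gates)
  also have "\<dots> = (\<lambda>x. (\<Prod>i<n. ?c i) * ((\<Prod>i<n. if ?d i = 2 then \<i> else 1) *
       Xop {i. i < n \<and> (?d i = 1 \<or> ?d i = 2)} (Zop {i. i < n \<and> (?d i = 2 \<or> ?d i = 3)} (circuit n g \<psi>)) x))"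
    using pauli_circuit[OF circuit_states, of n "?d" g \<psi>] by simp
  also have "{i. i < n \<and> (?d i = 1 \<or> ?d i = 2)} = {i. i < n \<and> i \<in> a \<and> (p i = 1 \<or> p i = 2)}" by auto
  also have "{i. i < n \<and> (?d i = 2 \<or> ?d i = 3)} = {i. i < n \<and> i \<in> a \<and> (p i = 2 \<or> p i = 3)}" by auto
  finally have fin: "circuit n g (circuit n (\<lambda>i. if i \<in> a then pauli1 P else pauli1 0) \<psi>) =
    (\<lambda>x. (\<Prod>i<n. ?c i) * ((\<Prod>i<n. if ?d i = 2 then \<i> else 1) *
        Xop {i. i < n \<and> i \<in> a \<and> (p i = 1 \<or> p i = 2)} (Zop {i. i < n \<and> i \<in> a \<and> (p i = 2 \<or> p i = 3)} (circuit n g \<psi>)) x))" .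
  have sc: "(\<Prod>i<n. ?c i) * (\<Prod>i<n. if ?d i = 2 then \<i> else 1) = (\<Prod>i<n. if i \<in> a then c i * (if p i = 2 then \<i> else 1) else 1)"
    unfolding prod.distrib[symmetric] by (rule prod.cong) auto
  show ?thesis unfolding fin by (simp only: mult.assoc[symmetric] sc)
qed

lemma prod_nonzero_if: "(\<And>i. i < (n::nat) \<Longrightarrow> i \<in> a \<Longrightarrow> c i \<noteq> 0) \<Longrightarrow> (\<Prod>i<n. if i \<in> a then c i * (if (p i::nat) = 2 then \<i> else 1) else (1::complex)) \<noteq> 0"
  by (subst prod_zero_iff) auto

primrec mpow :: "gate1 \<Rightarrow> nat \<Rightarrow> gate1" where
  "mpow g 0 = pauli1 0"
| "mpow g (Suc m) = mmult1 g (mpow g m)"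

lemma adj1_mmult: "adj1 (mmult1 f h) = mmult1 (adj1 h) (adj1 f)"
  by (auto simp: fun_eq_iff adj1_def mmult1_expand mult.commute)

lemma adj1_I[simp]: "adj1 (pauli1 0) = pauli1 0"
  by (auto simp: fun_eq_iff adj1_def pauli1_def)

lemma mpow_unit: assumes "unitary1 g" shows "mmult1 (adj1 (mpow g m)) (mpow g m) = pauli1 0"
proof (induction m)
  case 0 then show ?case by simp
next
  case (Suc m)
  have "mmult1 (adj1 (mpow g (Suc m))) (mpow g (Suc m)) =
        mmult1 (adj1 (mpow g m)) (mmult1 (mmult1 (adj1 g) g) (mpow g m))"
    by (simp add: adj1_mmult mmult1_assoc)
  also have "\<dots> = pauli1 0" using unitary_left[OF assms] Suc by simp
  finally show ?case .
qed

lemma sigma_pow: "((\<lambda>P. mmult1 (mmult1 g P) (adj1 g)) ^^ m) P = mmult1 (mmult1 (mpow g m) P) (adj1 (mpow g m))"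
proof (induction m)
  case 0 then show ?case by simp
next
  case (Suc m) then show ?case by (simp add: adj1_mmult mmult1_assoc)
qed

lemma funpow_in: "f ` S \<subseteq> S \<Longrightarrow> x \<in> S \<Longrightarrow> (f ^^ m) x \<in> S"
  by (induction m) auto

lemma funpow_inj: "f ` S \<subseteq> S \<Longrightarrow> inj_on f S \<Longrightarrow> inj_on (f ^^ m) S"
proof (induction m)
  case 0 then show ?case by simp
next
  case (Suc m)
  have "(f ^^ m) ` S \<subseteq> S" using funpow_in[OF Suc.prems(1)] by blast
  then have "inj_on f ((f ^^ m) ` S)" using Suc.prems(2) inj_on_subset by blast
  then have "inj_on (f \<circ> (f ^^ m)) S" using Suc by (intro comp_inj_on) auto
  then show ?case by (simp only: funpow.simps(2))
qed

lemma orbit_return: assumes fin: "finite S" and img: "f ` S \<subseteq> S" and inj: "inj_on f S" and x: "x \<in> S"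
  shows "\<exists>N>0. (f ^^ N) x = x"
proof -
  let ?h = "\<lambda>m. (f ^^ m) x"
  have hS: "?h ` {0..card S} \<subseteq> S" using funpow_in[OF img x] by blast
  have "\<not> inj_on ?h {0..card S}"
  proof
    assume "inj_on ?h {0..card S}"
    then have "card {0..card S} \<le> card S" using card_inj_on_le[OF _ hS fin] by blast
    then show False by simp
  qed
  then obtain a b where ab: "a \<in> {0..card S}" "b \<in> {0..card S}" "a \<noteq> b" "?h a = ?h b"
    unfolding inj_on_def by blast
  have "\<exists>a b. a < b \<and> ?h a = ?h b"
  proof (cases "a < b")
    case True then show ?thesis using ab by blast
  next
    case False then have "b < a" using ab(3) by simp
    then show ?thesis using ab(4) by metis
  qed
  then obtain a b where ab2: "a < b" "?h a = ?h b" by blast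
  have "(f ^^ a) ((f ^^ (b - a)) x) = (f ^^ b) x"
    using ab2(1) by (metis funpow_add le_add_diff_inverse less_imp_le o_apply)
  then have "(f ^^ a) ((f ^^ (b - a)) x) = (f ^^ a) x" using ab2(2) by simp
  moreover have "(f ^^ (b - a)) x \<in> S" by (rule funpow_in[OF img x])
  ultimately have "(f ^^ (b - a)) x = x"
    using funpow_inj[OF img inj, of a] x unfolding inj_on_def by blast
  then show ?thesis using ab2(1) by (intro exI[of _ "b - a"]) auto
qed

lemma funpow_fix: "f x = x \<Longrightarrow> (f ^^ m) x = x"
  by (induction m) auto

lemma pg_finite: "finite pauli_group1"
proof -
  have "pauli_group1 \<subseteq> (\<lambda>(c, j). (\<lambda>a b. c * pauli1 j a b)) ` ({1, -1, \<i>, - \<i>} \<times> {..<4})"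
    unfolding pauli_group1_def by auto
  then show ?thesis by (rule finite_subset) auto
qed

lemma comm_scalar:
  assumes x: "mmult1 M (pauli1 1) = mmult1 (pauli1 1) M" and z: "mmult1 M (pauli1 3) = mmult1 (pauli1 3) M"
  shows "M = (\<lambda>a b. M False False * pauli1 0 a b)"
proof -
  have z1: "M False True = 0" using fun_cong[OF fun_cong[OF z, of False], of True]
    by (simp add: mmult1_expand pauli1_def)
  have z2: "M True False = 0" using fun_cong[OF fun_cong[OF z, of True], of False]
    by (simp add: mmult1_expand pauli1_def)
  have x1: "M True True = M False False" using fun_cong[OF fun_cong[OF x, of False], of True]
    by (simp add: mmult1_expand pauli1_def)
  show ?thesis
  proof (intro ext)
    fix a b show "M a b = M False False * pauli1 0 a b"
      using z1 z2 x1 by (cases a; cases b) (simp_all add: pauli1_def)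
  qed
qed

lemma single_power: assumes c: "clifford1 g"
  shows "\<exists>N>0. \<exists>l. l \<noteq> 0 \<and> mpow g N = (\<lambda>a b. l * pauli1 0 a b)"
proof -
  have u: "unitary1 g" using c by (simp add: clifford1_def)
  define \<sigma> where "\<sigma> = (\<lambda>P. mmult1 (mmult1 g P) (adj1 g))"
  have img: "\<sigma> ` pauli_group1 \<subseteq> pauli_group1" using c unfolding \<sigma>_def clifford1_def by auto
  have inj: "inj_on \<sigma> pauli_group1"
  proof (rule inj_onI)
    fix P P' assume "\<sigma> P = \<sigma> P'"
    then have "mmult1 (mmult1 (adj1 g) (\<sigma> P)) g = mmult1 (mmult1 (adj1 g) (\<sigma> P')) g" by simp
    then show "P = P'" unfolding \<sigma>_def conj_back2[OF u] .
  qed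
  obtain NX where NX: "NX > 0" "(\<sigma> ^^ NX) (pauli1 1) = pauli1 1"
    using orbit_return[OF pg_finite img inj pauli_in_group[of 1]] by auto
  obtain NZ where NZ: "NZ > 0" "(\<sigma> ^^ NZ) (pauli1 3) = pauli1 3"
    using orbit_return[OF pg_finite img inj pauli_in_group[of 3]] by auto
  define N where "N = NX * NZ"
  have fx: "(\<sigma> ^^ N) (pauli1 1) = pauli1 1"
    unfolding N_def funpow_mult[symmetric] by (rule funpow_fix[where f="\<sigma> ^^ NX"]) (rule NX(2))
  have fz: "(\<sigma> ^^ N) (pauli1 3) = pauli1 3"
    unfolding N_def mult.commute[of NX] funpow_mult[symmetric] by (rule funpow_fix[where f="\<sigma> ^^ NZ"]) (rule NZ(2))
  define M where "M = mpow g N"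
  have MU: "mmult1 (adj1 M) M = pauli1 0" unfolding M_def by (rule mpow_unit[OF u])
  have comm: "mmult1 M P = mmult1 P M" if "mmult1 (mmult1 M P) (adj1 M) = P" for P
  proof -
    have "mmult1 P M = mmult1 (mmult1 (mmult1 M P) (adj1 M)) M" using that by simp
    also have "\<dots> = mmult1 M P" using MU by (simp add: mmult1_assoc)
    finally show ?thesis by simp
  qed
  have cx: "mmult1 M (pauli1 1) = mmult1 (pauli1 1) M"
    by (rule comm) (use fx in \<open>simp add: \<sigma>_def sigma_pow M_def\<close>)
  have cz: "mmult1 M (pauli1 3) = mmult1 (pauli1 3) M"
    by (rule comm) (use fz in \<open>simp add: \<sigma>_def sigma_pow M_def\<close>)
  have Ms: "M = (\<lambda>a b. M False False * pauli1 0 a b)" by (rule comm_scalar[OF cx cz])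
  have "M False False \<noteq> 0"
  proof
    assume h: "M False False = 0"
    then have "M = (\<lambda>a b. 0)" using Ms by (simp add: fun_eq_iff)
    then have "mmult1 (adj1 M) M False False = 0" by (simp add: mmult1_expand)
    then show False using MU by (simp add: pauli1_def)
  qed
  moreover have "N > 0" unfolding N_def using NX NZ by simp
  ultimately show ?thesis using Ms unfolding M_def by blast
qed

lemma mpow_add: "mpow g (a + b) = mmult1 (mpow g a) (mpow g b)"
  by (induction a) (simp_all add: mmult1_assoc)

lemma mpow_mult: "mpow g (a * b) = mpow (mpow g a) b"
  by (induction b) (simp_all add: mpow_add)

lemma mpow_scalar: "mpow (\<lambda>a b. l * pauli1 0 a b) r = (\<lambda>a b. l ^ r * pauli1 0 a b)"
proof (induction r)
  case 0 then show ?case by simp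
next
  case (Suc r) then show ?case by (simp add: mmult1_scale_left mmult1_scale_right mult.assoc)
qed

lemma circuit_id: "\<psi> \<in> states n \<Longrightarrow> circuit n (\<lambda>i. pauli1 0) \<psi> = \<psi>"
proof -
  assume \<psi>: "\<psi> \<in> states n"
  have "XG {} = (\<lambda>i. pauli1 0)" by (rule ext) (simp add: XG_def)
  then have "circuit n (\<lambda>i. pauli1 0) \<psi> = circuit n (XG {}) \<psi>" by simp
  also have "\<dots> = Xop {} \<psi>" by (rule Xop_circuit[symmetric, OF \<psi>]) simp
  also have "\<dots> = \<psi>" by (simp add: Xop_def)
  finally show ?thesis .
qed

lemma circuit_pow: "\<psi> \<in> states n \<Longrightarrow> (circuit n g ^^ m) \<psi> = circuit n (\<lambda>i. mpow (g i) m) \<psi>"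
proof (induction m)
  case 0 then show ?case by (simp add: circuit_id)
next
  case (Suc m) then show ?case by (simp add: circuit_comp)
qed

lemma power_scalar: assumes olc: "one_local_clifford n g"
  shows "\<exists>N>0. \<exists>L. L \<noteq> 0 \<and> (\<forall>\<psi>\<in>states n. (circuit n g ^^ N) \<psi> = (\<lambda>x. L * \<psi> x))"
proof -
  have "\<forall>i. \<exists>q::nat \<times> complex. i < n \<longrightarrow> fst q > 0 \<and> snd q \<noteq> 0 \<and> mpow (g i) (fst q) = (\<lambda>a b. snd q * pauli1 0 a b)"
  proof
    fix i show "\<exists>q::nat \<times> complex. i < n \<longrightarrow> fst q > 0 \<and> snd q \<noteq> 0 \<and> mpow (g i) (fst q) = (\<lambda>a b. snd q * pauli1 0 a b)"
    proof (cases "i < n")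
      case True
      then obtain N l where "N > 0" "l \<noteq> 0" "mpow (g i) N = (\<lambda>a b. l * pauli1 0 a b)"
        using single_power olc unfolding one_local_clifford_def by blast
      then show ?thesis by (intro exI[of _ "(N, l)"]) simp
    qed simp
  qed
  then obtain f where f: "\<And>i. i < n \<Longrightarrow> fst (f i) > 0 \<and> snd (f i) \<noteq> 0 \<and> mpow (g i) (fst (f i)) = (\<lambda>a b. snd (f i) * pauli1 0 a b)"
    by (metis choice)
  define N where "N = (\<Prod>i<n. fst (f i))"
  have Npos: "N > 0" unfolding N_def using f by (simp add: prod_pos)
  define L where "L = (\<Prod>i<n. snd (f i) ^ (N div fst (f i)))"
  have Lnz: "L \<noteq> 0" unfolding L_def using f by (subst prod_zero_iff) auto
  have mp: "mpow (g i) N = (\<lambda>a b. snd (f i) ^ (N div fst (f i)) * pauli1 0 a b)" if i: "i < n" for i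
  proof -
    have "fst (f i) dvd N" unfolding N_def using i by (intro dvd_prodI) auto
    then have "N = fst (f i) * (N div fst (f i))" by simp
    then have "mpow (g i) N = mpow (mpow (g i) (fst (f i))) (N div fst (f i))" by (metis mpow_mult)
    then show ?thesis using f[OF i] by (simp add: mpow_scalar)
  qed
  have "\<forall>\<psi>\<in>states n. (circuit n g ^^ N) \<psi> = (\<lambda>x. L * \<psi> x)"
  proof
    fix \<psi> assume \<psi>: "\<psi> \<in> states n"
    have "(circuit n g ^^ N) \<psi> = circuit n (\<lambda>i. mpow (g i) N) \<psi>" by (rule circuit_pow[OF \<psi>])
    also have "\<dots> = circuit n (\<lambda>i a b. snd (f i) ^ (N div fst (f i)) * pauli1 0 a b) \<psi>"
      by (rule fun_cong[where x=\<psi>], rule circuit_cong) (simp add: mp)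
    also have "\<dots> = (\<lambda>x. L * circuit n (\<lambda>i. pauli1 0) \<psi> x)"
      unfolding L_def by (rule circuit_scale_gates)
    also have "\<dots> = (\<lambda>x. L * \<psi> x)" by (simp add: circuit_id[OF \<psi>])
    finally show "(circuit n g ^^ N) \<psi> = (\<lambda>x. L * \<psi> x)" .
  qed
  then show ?thesis using Npos Lnz by blast
qed

context cssL begin

lemma Q_scale: assumes "\<phi> \<in> Q" shows "(\<lambda>x. c * \<phi> x) \<in> Q"
proof -
  have "(\<lambda>x. c * \<phi> x) \<in> states n" using assms by (auto simp: codespace_def states_def)
  moreover have "\<forall>a\<in>A. Xop a (\<lambda>x. c * \<phi> x) = (\<lambda>x. c * \<phi> x)"
    using assms by (auto simp: codespace_def Xop_def fun_eq_iff)
  moreover have "\<forall>b\<in>B. Zop b (\<lambda>x. c * \<phi> x) = (\<lambda>x. c * \<phi> x)"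
    using assms by (auto simp: codespace_def Zop_fix_iff)
  ultimately show ?thesis by (simp add: codespace_def)
qed

lemma C_surj: assumes olc: "one_local_clifford n g" and lo: "logical_operator n A B (circuit n g)"
  and \<phi>: "\<phi> \<in> Q" shows "\<exists>\<chi>\<in>Q. circuit n g \<chi> = \<phi>"
proof -
  obtain N L where NL: "N > 0" "L \<noteq> 0" "\<forall>\<psi>\<in>states n. (circuit n g ^^ N) \<psi> = (\<lambda>x. L * \<psi> x)"
    using power_scalar[OF olc] by blast
  obtain N' where N': "N = Suc N'" using NL(1) gr0_implies_Suc by blast
  have inQ: "(circuit n g ^^ m) \<phi> \<in> Q" for m
  proof (induction m)
    case 0 then show ?case using \<phi> by simp
  next
    case (Suc m) then show ?case using lo by (auto simp: logical_operator_def)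
  qed
  define \<chi> where "\<chi> = (\<lambda>x. (1 / L) * (circuit n g ^^ N') \<phi> x)"
  have "\<chi> \<in> Q" unfolding \<chi>_def by (rule Q_scale[OF inQ])
  moreover have "circuit n g \<chi> = \<phi>"
  proof -
    have st: "\<phi> \<in> states n" using \<phi> by (simp add: codespace_def)
    have "circuit n g \<chi> = (\<lambda>x. (1 / L) * circuit n g ((circuit n g ^^ N') \<phi>) x)"
      unfolding \<chi>_def by (rule circuit_scale)
    also have "circuit n g ((circuit n g ^^ N') \<phi>) = (circuit n g ^^ N) \<phi>" using N' by simp
    also have "\<dots> = (\<lambda>x. L * \<phi> x)" using NL(3) st by blast
    finally show ?thesis using NL(2) by simp
  qed
  ultimately show ?thesis by blast
qed

end

lemma Zop_empty[simp]: "Zop {} \<phi> = \<phi>" by (simp add: Zop_def)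
lemma Xop_empty[simp]: "Xop {} \<phi> = \<phi>" by (simp add: Xop_def)
lemma Xop_Xop: "Xop a (Xop b \<phi>) = Xop (sdiff a b) \<phi>"
proof -
  have "\<And>x. sdiff (sdiff x a) b = sdiff x (sdiff a b)" by auto
  then show ?thesis by (simp add: Xop_def)
qed

definition lin :: "(state \<Rightarrow> state) \<Rightarrow> bool" where
  "lin Op \<longleftrightarrow> (\<forall>M (c :: nat set \<Rightarrow> complex) \<phi>. Op (\<lambda>y. \<Sum>m\<in>M. c m * \<phi> m y) = (\<lambda>y. \<Sum>m\<in>M. c m * Op (\<phi> m) y))"

lemma lin_Xop: "lin (Xop a)" by (simp add: lin_def Xop_def)
lemma lin_Zop: "lin (Zop b)" by (simp add: lin_def Zop_def sum_distrib_left mult_ac)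
lemma lin_comp: "lin Op1 \<Longrightarrow> lin Op2 \<Longrightarrow> lin (Op1 \<circ> Op2)" by (simp add: lin_def)
lemma lin_circuit: "lin (circuit n g)" by (simp add: lin_def circuit_lin)

context cssL begin

lemma L_fix:
  assumes sub: "\<alpha> \<subseteq> {0..<n}" "\<beta> \<subseteq> {0..<n}" "\<gamma> \<subseteq> {0..<n}" "\<delta> \<subseteq> {0..<n}"
    and rel: "\<And>x. x \<in> perp n B \<Longrightarrow> Xop \<alpha> (Zop \<beta> (cw A x)) = (\<lambda>y. c * Xop \<gamma> (Zop \<delta> (cw A x)) y)"
  shows "sdiff \<alpha> \<gamma> \<in> A \<and> sdiff \<beta> \<delta> \<in> B"
proof -
  have fin: "finite \<alpha>" "finite \<beta>" "finite \<gamma>" "finite \<delta>" using sub finite_subset by blast+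
  have e0: "{} \<in> perp n B" by (auto simp: perp_def)
  have A0: "{} \<in> A" by (rule subsp_empty[OF subA])
  have r0: "\<And>y. Xop \<alpha> (Zop \<beta> (cw A {})) y = c * Xop \<gamma> (Zop \<delta> (cw A {})) y" using rel[OF e0] by metis
  have "Xop \<alpha> (Zop \<beta> (cw A {})) \<alpha> = 1" using A0 by (simp add: Xop_def Zop_def cw_def)
  then have c0: "c \<noteq> 0" using r0[of \<alpha>] by auto
  have "Xop \<gamma> (Zop \<delta> (cw A {})) \<gamma> = 1" using A0 by (simp add: Xop_def Zop_def cw_def)
  then have "Xop \<alpha> (Zop \<beta> (cw A {})) \<gamma> = c" using r0[of \<gamma>] by simp
  then have "cw A {} (sdiff \<gamma> \<alpha>) \<noteq> 0" using c0 by (auto simp: Xop_def Zop_def)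
  then have ga: "sdiff \<gamma> \<alpha> \<in> A" by (simp add: cw_def split: if_splits)
  then have aga: "sdiff \<alpha> \<gamma> \<in> A" by (simp add: sdiff_comm)
  define w0 where "w0 = sdiff \<gamma> \<alpha>"
  have finw0: "finite w0" unfolding w0_def using fin by simp
  have key: "(-1::complex) ^ card (sdiff x w0 \<inter> \<beta>) = c * (-1) ^ card (x \<inter> \<delta>)" if x: "x \<in> perp n B" for x
  proof -
    have r: "Xop \<alpha> (Zop \<beta> (cw A x)) (sdiff x \<gamma>) = c * Xop \<gamma> (Zop \<delta> (cw A x)) (sdiff x \<gamma>)"
      using rel[OF x] by metis
    have e1: "sdiff (sdiff x \<gamma>) \<gamma> = x" by simp
    have e2: "sdiff (sdiff x \<gamma>) \<alpha> = sdiff x w0" unfolding w0_def by auto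
    have e3: "sdiff x (sdiff x w0) = w0" by simp
    have "cw A x x = 1" using A0 by (simp add: cw_def)
    moreover have "cw A x (sdiff x w0) = 1" using ga unfolding cw_def w0_def by simp
    ultimately show ?thesis using r unfolding Xop_def Zop_def e1 e2 by simp
  qed
  have cval: "(-1::complex) ^ card (w0 \<inter> \<beta>) = c" using key[OF e0] by simp
  have "even (card (x \<inter> sdiff \<beta> \<delta>))" if x: "x \<in> perp n B" for x
  proof -
    have fx: "finite x" using x finite_subset by (auto simp: perp_def)
    have a1: "(-1::complex) ^ card (sdiff x w0 \<inter> \<beta>) = (-1) ^ card (x \<inter> \<beta>) * c"
      unfolding neg1_pow_card[OF fx finw0, of \<beta>] cval ..
    have "c * (-1::complex) ^ card (x \<inter> \<beta>) = c * (-1) ^ card (x \<inter> \<delta>)"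
      using a1 key[OF x] by (metis mult.commute)
    then have "(-1::complex) ^ card (x \<inter> \<beta>) = (-1) ^ card (x \<inter> \<delta>)" using c0 by simp
    then have "even (card (x \<inter> \<beta>)) \<longleftrightarrow> even (card (x \<inter> \<delta>))"
      by (cases "even (card (x \<inter> \<beta>))"; cases "even (card (x \<inter> \<delta>))") simp_all
    then show ?thesis using even_card_Int_sdiff[OF fin(2) fin(4), of x] by simp
  qed
  then have "sdiff \<beta> \<delta> \<in> perp n (perp n B)"
    unfolding perp_def[of n "perp n B"] using sdiff_subset[OF sub(2,4)] by blast
  then have "sdiff \<beta> \<delta> \<in> B" using perp_perp[OF subB] by simp
  then show ?thesis using aga by blast
qed

lemma rel_extend:
  assumes l1: "lin Op1" and l2: "lin Op2"
    and em: "\<And>m. m \<subseteq> {0..<k} \<Longrightarrow> circuit n g (Op1 (e m)) = Op2 (circuit n g (e m))"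
    and chi: "\<chi> \<in> Q"
  shows "circuit n g (Op1 \<chi>) = Op2 (circuit n g \<chi>)"
proof -
  let ?c = "\<lambda>m. \<chi> (lx u m k)"
  have "circuit n g (Op1 \<chi>) = circuit n g (\<lambda>y. \<Sum>m\<in>Pow {0..<k}. ?c m * Op1 (e m) y)"
    using l1 Q_expand[OF chi] unfolding lin_def by metis
  also have "\<dots> = (\<lambda>y. \<Sum>m\<in>Pow {0..<k}. ?c m * circuit n g (Op1 (e m)) y)" by (rule circuit_lin)
  also have "\<dots> = (\<lambda>y. \<Sum>m\<in>Pow {0..<k}. ?c m * Op2 (circuit n g (e m)) y)"
    using em by (intro ext sum.cong) auto
  also have "\<dots> = Op2 (\<lambda>y. \<Sum>m\<in>Pow {0..<k}. ?c m * circuit n g (e m) y)"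
    using l2 unfolding lin_def by metis
  also have "(\<lambda>y. \<Sum>m\<in>Pow {0..<k}. ?c m * circuit n g (e m) y) = circuit n g \<chi>"
    using circuit_lin[of n g, symmetric] arg_cong[OF Q_expand[OF chi], of "circuit n g"] by simp
  finally show ?thesis .
qed

lemma rel_fix:
  assumes olc: "one_local_clifford n g" and lo: "logical_operator n A B (circuit n g)"
    and rel: "\<And>\<chi>. \<chi> \<in> Q \<Longrightarrow> circuit n g (Op1 \<chi>) = Xop \<gamma> (Zop \<delta> (circuit n g \<chi>))"
    and com: "\<And>\<chi>. \<chi> \<in> Q \<Longrightarrow> circuit n g (Op1 \<chi>) = (\<lambda>x. \<kappa> * Xop \<alpha> (Zop \<beta> (circuit n g \<chi>)) x)"
    and kap: "\<kappa> \<noteq> 0"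
    and sub: "\<alpha> \<subseteq> {0..<n}" "\<beta> \<subseteq> {0..<n}" "\<gamma> \<subseteq> {0..<n}" "\<delta> \<subseteq> {0..<n}"
  shows "sdiff \<alpha> \<gamma> \<in> A \<and> sdiff \<beta> \<delta> \<in> B"
proof (rule L_fix[OF sub, where c="1 / \<kappa>"])
  fix x assume x: "x \<in> perp n B"
  obtain \<chi> where \<chi>: "\<chi> \<in> Q" "circuit n g \<chi> = cw A x" using C_surj[OF olc lo cw_in_Q[OF x]] by blast
  have "(\<lambda>y. \<kappa> * Xop \<alpha> (Zop \<beta> (cw A x)) y) = Xop \<gamma> (Zop \<delta> (cw A x))"
    using rel[OF \<chi>(1)] com[OF \<chi>(1)] \<chi>(2) by simp
  then have eq: "\<And>y. \<kappa> * Xop \<alpha> (Zop \<beta> (cw A x)) y = Xop \<gamma> (Zop \<delta> (cw A x)) y" by metis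
  show "Xop \<alpha> (Zop \<beta> (cw A x)) = (\<lambda>y. 1 / \<kappa> * Xop \<gamma> (Zop \<delta> (cw A x)) y)"
  proof
    fix y show "Xop \<alpha> (Zop \<beta> (cw A x)) y = 1 / \<kappa> * Xop \<gamma> (Zop \<delta> (cw A x)) y"
      using eq[of y] kap by (simp add: field_simps)
  qed
qed

lemma split_of: assumes X: "f2_subspace n X" and h: "\<forall>a\<in>X. a \<inter> h \<in> X" and hs: "h \<subseteq> {0..<n}"
  shows "subspace_splits n X h"
proof -
  let ?X1 = "(\<lambda>a. a \<inter> h) ` X" and ?X2 = "(\<lambda>a. a - h) ` X"
  have s1: "f2_subspace n ?X1"
    unfolding f2_subspace_def
  proof (intro conjI ballI)
    show "?X1 \<subseteq> Pow {0..<n}" using subsp_sub[OF X] by auto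
    show "{} \<in> ?X1" using subsp_empty[OF X] by force
    fix a b assume "a \<in> ?X1" "b \<in> ?X1"
    then obtain a' b' where "a' \<in> X" "b' \<in> X" "a = a' \<inter> h" "b = b' \<inter> h" by blast
    moreover have "sdiff (a' \<inter> h) (b' \<inter> h) = sdiff a' b' \<inter> h" by auto
    ultimately show "sdiff a b \<in> ?X1" using subsp_sdiff[OF X] by auto
  qed
  have s2: "f2_subspace n ?X2"
    unfolding f2_subspace_def
  proof (intro conjI ballI)
    show "?X2 \<subseteq> Pow {0..<n}" using subsp_sub[OF X] by auto
    show "{} \<in> ?X2" using subsp_empty[OF X] by force
    fix a b assume "a \<in> ?X2" "b \<in> ?X2"
    then obtain a' b' where "a' \<in> X" "b' \<in> X" "a = a' - h" "b = b' - h" by blast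
    moreover have "sdiff (a' - h) (b' - h) = sdiff a' b' - h" by auto
    ultimately show "sdiff a b \<in> ?X2" using subsp_sdiff[OF X] by auto
  qed
  have s3: "\<forall>a\<in>?X1. a \<subseteq> h" by auto
  have s4: "\<forall>a\<in>?X2. a \<subseteq> {0..<n} - h" using subsp_sub[OF X] by auto
  have s5: "X = {sdiff a1 a2 |a1 a2. a1 \<in> ?X1 \<and> a2 \<in> ?X2}"
  proof
    show "X \<subseteq> {sdiff a1 a2 |a1 a2. a1 \<in> ?X1 \<and> a2 \<in> ?X2}"
    proof
      fix a assume a: "a \<in> X"
      have "a = sdiff (a \<inter> h) (a - h)" by auto
      then show "a \<in> {sdiff a1 a2 |a1 a2. a1 \<in> ?X1 \<and> a2 \<in> ?X2}" using a by blast
    qed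
    show "{sdiff a1 a2 |a1 a2. a1 \<in> ?X1 \<and> a2 \<in> ?X2} \<subseteq> X"
    proof
      fix z assume "z \<in> {sdiff a1 a2 |a1 a2. a1 \<in> ?X1 \<and> a2 \<in> ?X2}"
      then obtain a b where ab: "a \<in> X" "b \<in> X" "z = sdiff (a \<inter> h) (b - h)" by blast
      have "b - h = sdiff b (b \<inter> h)" by auto
      then have "b - h \<in> X" using subsp_sdiff[OF X ab(2) h[rule_format, OF ab(2)]] by simp
      then show "z \<in> X" using ab subsp_sdiff[OF X h[rule_format, OF ab(1)]] by simp
    qed
  qed
  show ?thesis unfolding subspace_splits_def using s1 s2 s3 s4 s5 by blast
qed

end

context cssL begin

lemma reindex_flip: assumes "l < k"
  shows "(\<Sum>m'\<in>Pow {0..<k}. F m') = (\<Sum>m'\<in>Pow {0..<k}. F (sdiff m' {l}))"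
  by (rule sum.reindex_bij_witness[where i="\<lambda>m. sdiff m {l}" and j="\<lambda>m. sdiff m {l}"])
     (use assms in auto)

lemma sumX: assumes l: "l < k"
  shows "Xop (u l) (\<lambda>x. \<Sum>m'\<in>Pow {0..<k}. f m' * e m' x) = (\<lambda>x. \<Sum>m'\<in>Pow {0..<k}. f (sdiff m' {l}) * e m' x)"
proof -
  have "Xop (u l) (\<lambda>x. \<Sum>m'\<in>Pow {0..<k}. f m' * e m' x) = (\<lambda>x. \<Sum>m'\<in>Pow {0..<k}. f m' * Xop (u l) (e m') x)"
    using lin_Xop unfolding lin_def by blast
  also have "\<dots> = (\<lambda>x. \<Sum>m'\<in>Pow {0..<k}. f m' * e (sdiff m' {l}) x)" by (simp add: Xop_e[OF l])
  also have "\<dots> = (\<lambda>x. \<Sum>m'\<in>Pow {0..<k}. f (sdiff m' {l}) * e m' x)"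
  proof
    fix x
    show "(\<Sum>m'\<in>Pow {0..<k}. f m' * e (sdiff m' {l}) x) = (\<Sum>m'\<in>Pow {0..<k}. f (sdiff m' {l}) * e m' x)"
      using reindex_flip[OF l, of "\<lambda>m'. f m' * e (sdiff m' {l}) x"] by simp
  qed
  finally show ?thesis .
qed

lemma sumZ: assumes l: "l < k"
  shows "Zop (v l) (\<lambda>x. \<Sum>m'\<in>Pow {0..<k}. f m' * e m' x) = (\<lambda>x. \<Sum>m'\<in>Pow {0..<k}. f m' * (if l \<in> m' then -1 else 1) * e m' x)"
proof -
  have "Zop (v l) (\<lambda>x. \<Sum>m'\<in>Pow {0..<k}. f m' * e m' x) = (\<lambda>x. \<Sum>m'\<in>Pow {0..<k}. f m' * Zop (v l) (e m') x)"
    using lin_Zop unfolding lin_def by blast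
  also have "\<dots> = (\<lambda>x. \<Sum>m'\<in>Pow {0..<k}. f m' * (if l \<in> m' then -1 else 1) * e m' x)"
    by (simp add: Zop_e[OF l] mult.assoc)
  finally show ?thesis .
qed

lemma main_contra:
  assumes ns: "non_splitting n A B" and olc: "one_local_clifford n g"
    and lo: "logical_operator n A B (circuit n g)"
    and act: "\<And>m. m \<subseteq> {0..<k} \<Longrightarrow> circuit n g (e m) = (\<lambda>x. \<Sum>m'\<in>Pow {0..<k}. W m' m * e m' x)"
    and l: "l < k"
    and unc1: "\<And>m m'. m \<subseteq> {0..<k} \<Longrightarrow> m' \<subseteq> {0..<k} \<Longrightarrow> W m' (sdiff m {l}) = W (sdiff m' {l}) m"
    and unc2: "\<And>m m'. m \<subseteq> {0..<k} \<Longrightarrow> m' \<subseteq> {0..<k} \<Longrightarrow> W m' m \<noteq> 0 \<Longrightarrow> (l \<in> m') = (l \<in> m)"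
    and cov: "(j < k \<and> (\<forall>m m'. m \<subseteq> {0..<k} \<longrightarrow> m' \<subseteq> {0..<k} \<longrightarrow> W m' (sdiff m {j}) = W m' m * (if j \<in> m' then -1 else 1)))
      \<or> (j < k \<and> (\<forall>m m'. m \<subseteq> {0..<k} \<longrightarrow> m' \<subseteq> {0..<k} \<longrightarrow> W (sdiff m' {j}) m = (if j \<in> m then -1 else 1) * W m' m))
      \<or> (c < k \<and> t < k \<and> c \<noteq> t \<and> (\<forall>m m'. m \<subseteq> {0..<k} \<longrightarrow> m' \<subseteq> {0..<k} \<longrightarrow> W m' (sdiff m {c}) = W (sdiff (sdiff m' {c}) {t}) m))"
  shows False
proof -
  obtain cx px cz pz where cd: "\<And>i. i < n \<Longrightarrow> cx i \<noteq> 0 \<and> cz i \<noteq> 0 \<and> px i \<in> {1,2,3} \<and> pz i \<in> {1,2,3} \<and> px i \<noteq> pz i \<and>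
     mmult1 (mmult1 (g i) (pauli1 1)) (adj1 (g i)) = (\<lambda>a b. cx i * pauli1 (px i) a b) \<and>
     mmult1 (mmult1 (g i) (pauli1 3)) (adj1 (g i)) = (\<lambda>a b. cz i * pauli1 (pz i) a b)"
    using cliff_data[OF olc] by blast
  have un: "\<And>i. i < n \<Longrightarrow> unitary1 (g i)" using olc by (simp add: one_local_clifford_def clifford1_def)
  let ?C = "circuit n g"
  define aX where "aX a = {i. i < n \<and> i \<in> a \<and> (px i = 1 \<or> px i = 2)}" for a
  define bX where "bX a = {i. i < n \<and> i \<in> a \<and> (px i = 2 \<or> px i = 3)}" for a
  define aZ where "aZ a = {i. i < n \<and> i \<in> a \<and> (pz i = 1 \<or> pz i = 2)}" for a
  define bZ where "bZ a = {i. i < n \<and> i \<in> a \<and> (pz i = 2 \<or> pz i = 3)}" for a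
  have subs: "aX a \<subseteq> {0..<n}" "bX a \<subseteq> {0..<n}" "aZ a \<subseteq> {0..<n}" "bZ a \<subseteq> {0..<n}" for a
    unfolding aX_def bX_def aZ_def bZ_def by auto
  have comX: "?C (Xop a \<chi>) = (\<lambda>x. (\<Prod>i<n. if i \<in> a then cx i * (if px i = 2 then \<i> else 1) else 1) * Xop (aX a) (Zop (bX a) (?C \<chi>)) x)"
    if "\<chi> \<in> states n" "a \<subseteq> {0..<n}" for a \<chi>
  proof -
    have "XG a = (\<lambda>i. if i \<in> a then pauli1 1 else pauli1 0)" by (rule ext) (simp add: XG_def)
    then have "Xop a \<chi> = circuit n (\<lambda>i. if i \<in> a then pauli1 1 else pauli1 0) \<chi>"
      using Xop_circuit[OF that] by simp
    then show ?thesis unfolding aX_def bX_def using circ_comm[where P=1 and c=cx and p=px and a=a, OF un _ that(1)] cd by simp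
  qed
  have comZ: "?C (Zop b \<chi>) = (\<lambda>x. (\<Prod>i<n. if i \<in> b then cz i * (if pz i = 2 then \<i> else 1) else 1) * Xop (aZ b) (Zop (bZ b) (?C \<chi>)) x)"
    if "\<chi> \<in> states n" "b \<subseteq> {0..<n}" for b \<chi>
  proof -
    have "ZG b = (\<lambda>i. if i \<in> b then pauli1 3 else pauli1 0)" by (rule ext) (simp add: ZG_def)
    then have "Zop b \<chi> = circuit n (\<lambda>i. if i \<in> b then pauli1 3 else pauli1 0) \<chi>"
      using Zop_circuit[OF that] by simp
    then show ?thesis unfolding aZ_def bZ_def using circ_comm[where P=3 and c=cz and p=pz and a=b, OF un _ that(1)] cd by simp
  qed
  have fixX: "sdiff (aX a) \<gamma> \<in> A \<and> sdiff (bX a) \<delta> \<in> B"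
    if a: "a \<subseteq> {0..<n}" and gd: "\<gamma> \<subseteq> {0..<n}" "\<delta> \<subseteq> {0..<n}"
      and r: "\<And>m. m \<subseteq> {0..<k} \<Longrightarrow> ?C (Xop a (e m)) = Xop \<gamma> (Zop \<delta> (?C (e m)))" for a \<gamma> \<delta>
  proof (rule rel_fix[OF olc lo _ _ _ subs(1,2) gd])
    fix \<chi> assume \<chi>: "\<chi> \<in> Q"
    have "?C (Xop a \<chi>) = (Xop \<gamma> \<circ> Zop \<delta>) (?C \<chi>)"
      by (rule rel_extend[OF lin_Xop lin_comp[OF lin_Xop lin_Zop] _ \<chi>]) (simp add: r)
    then show "?C (Xop a \<chi>) = Xop \<gamma> (Zop \<delta> (?C \<chi>))" by simp
  next
    fix \<chi> assume \<chi>: "\<chi> \<in> Q"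
    show "?C (Xop a \<chi>) = (\<lambda>x. (\<Prod>i<n. if i \<in> a then cx i * (if px i = 2 then \<i> else 1) else 1) * Xop (aX a) (Zop (bX a) (?C \<chi>)) x)"
      using comX[OF _ a] \<chi> by (simp add: codespace_def)
  next
    show "(\<Prod>i<n. if i \<in> a then cx i * (if px i = 2 then \<i> else 1) else 1) \<noteq> 0"
      by (rule prod_nonzero_if) (use cd in auto)
  qed
  have fixZ: "sdiff (aZ b) \<gamma> \<in> A \<and> sdiff (bZ b) \<delta> \<in> B"
    if b: "b \<subseteq> {0..<n}" and gd: "\<gamma> \<subseteq> {0..<n}" "\<delta> \<subseteq> {0..<n}"
      and r: "\<And>m. m \<subseteq> {0..<k} \<Longrightarrow> ?C (Zop b (e m)) = Xop \<gamma> (Zop \<delta> (?C (e m)))" for b \<gamma> \<delta>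
  proof (rule rel_fix[OF olc lo _ _ _ subs(3,4) gd])
    fix \<chi> assume \<chi>: "\<chi> \<in> Q"
    have "?C (Zop b \<chi>) = (Xop \<gamma> \<circ> Zop \<delta>) (?C \<chi>)"
      by (rule rel_extend[OF lin_Zop lin_comp[OF lin_Xop lin_Zop] _ \<chi>]) (simp add: r)
    then show "?C (Zop b \<chi>) = Xop \<gamma> (Zop \<delta> (?C \<chi>))" by simp
  next
    fix \<chi> assume \<chi>: "\<chi> \<in> Q"
    show "?C (Zop b \<chi>) = (\<lambda>x. (\<Prod>i<n. if i \<in> b then cz i * (if pz i = 2 then \<i> else 1) else 1) * Xop (aZ b) (Zop (bZ b) (?C \<chi>)) x)"
      using comZ[OF _ b] \<chi> by (simp add: codespace_def)
  next
    show "(\<Prod>i<n. if i \<in> b then cz i * (if pz i = 2 then \<i> else 1) else 1) \<noteq> 0"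
      by (rule prod_nonzero_if) (use cd in auto)
  qed
  have e0: "{} \<subseteq> {0..<n}" by simp
  have stabA: "aX a \<in> A \<and> bX a \<in> B" if a: "a \<in> A" for a
  proof -
    have "?C (Xop a (e m)) = Xop {} (Zop {} (?C (e m)))" for m
      using e_in_Q[of m] a by (simp add: codespace_def)
    then show ?thesis using fixX[OF subsp_sub[OF subA a] e0 e0] by simp
  qed
  have stabB: "aZ b \<in> A \<and> bZ b \<in> B" if b: "b \<in> B" for b
  proof -
    have "?C (Zop b (e m)) = Xop {} (Zop {} (?C (e m)))" for m
      using e_in_Q[of m] b by (simp add: codespace_def)
    then show ?thesis using fixZ[OF subsp_sub[OF subB b] e0 e0] by simp
  qed
  define h where "h = {i. i < n \<and> (px i = 1 \<or> px i = 2) \<and> (pz i = 2 \<or> pz i = 3)}"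
  have hs: "h \<subseteq> {0..<n}" unfolding h_def by auto
  have rng: "\<And>i. i < n \<Longrightarrow> px i \<in> {1,2,3} \<and> pz i \<in> {1,2,3} \<and> px i \<noteq> pz i" using cd by blast
  have hA: "\<forall>a\<in>A. a \<inter> h \<in> A"
  proof
    fix a assume a: "a \<in> A"
    have as: "a \<subseteq> {0..<n}" using subsp_sub[OF subA a] .
    have 1: "aX a \<in> A" "bX a \<in> B" using stabA[OF a] by auto
    have 2: "aZ (bX a) \<in> A" using stabB[OF 1(2)] by auto
    have 3: "aX (aZ (bX a)) \<in> A" using stabA[OF 2] by auto
    have "a \<inter> h = sdiff (aX a) (aX (aZ (bX a)))"
    proof (rule set_eqI)
      fix i show "i \<in> a \<inter> h \<longleftrightarrow> i \<in> sdiff (aX a) (aX (aZ (bX a)))"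
      proof (cases "i < n")
        case True
        have r: "px i = 1 \<or> px i = 2 \<or> px i = 3" "pz i = 1 \<or> pz i = 2 \<or> pz i = 3" "px i \<noteq> pz i"
          using rng[OF True] by auto
        show ?thesis using r(1,2) r(3) True unfolding h_def aX_def bX_def aZ_def by (elim disjE) simp_all
      next
        case False then show ?thesis unfolding h_def aX_def by auto
      qed
    qed
    then show "a \<inter> h \<in> A" using subsp_sdiff[OF subA 1(1) 3] by simp
  qed
  have hB: "\<forall>b\<in>B. b \<inter> h \<in> B"
  proof
    fix b assume b: "b \<in> B"
    have 1: "aZ b \<in> A" "bZ b \<in> B" using stabB[OF b] by auto
    have 2: "bX (aZ b) \<in> B" using stabA[OF 1(1)] by auto
    have 3: "bZ (bX (aZ b)) \<in> B" using stabB[OF 2] by auto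
    have "b \<inter> h = sdiff (bZ b) (bZ (bX (aZ b)))"
    proof (rule set_eqI)
      fix i show "i \<in> b \<inter> h \<longleftrightarrow> i \<in> sdiff (bZ b) (bZ (bX (aZ b)))"
      proof (cases "i < n")
        case True
        have r: "px i = 1 \<or> px i = 2 \<or> px i = 3" "pz i = 1 \<or> pz i = 2 \<or> pz i = 3" "px i \<noteq> pz i"
          using rng[OF True] by auto
        show ?thesis using r(1,2) r(3) True unfolding h_def aZ_def bX_def bZ_def by (elim disjE) simp_all
      next
        case False then show ?thesis unfolding h_def bZ_def by auto
      qed
    qed
    then show "b \<inter> h \<in> B" using subsp_sdiff[OF subB 1(2) 3] by simp
  qed
  have "code_splits n A B h"
    unfolding code_splits_def using split_of[OF subA hA hs] split_of[OF subB hB hs] by blast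
  then have htriv: "h = {} \<or> h = {0..<n}" using ns hs unfolding non_splitting_def by blast
  show False
  proof (cases "h = {}")
    case True
    have nh: "\<not> ((px i = 1 \<or> px i = 2) \<and> (pz i = 2 \<or> pz i = 3))" if i: "i < n" for i
    proof
      assume "(px i = 1 \<or> px i = 2) \<and> (pz i = 2 \<or> pz i = 3)"
      then have "i \<in> h" using i unfolding h_def by simp
      then show False using True by simp
    qed
    have pz12: "pz i = 1 \<or> pz i = 2" if i: "i < n" for i
    proof -
      have r: "px i = 1 \<or> px i = 2 \<or> px i = 3" "pz i = 1 \<or> pz i = 2 \<or> pz i = 3" "px i \<noteq> pz i"
        using rng[OF i] by auto
      show ?thesis using r(1,2) r(3) nh[OF i] by (elim disjE) simp_all
    qed
    have px23: "px i = 2 \<or> px i = 3" if i: "i < n" for i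
    proof -
      have r: "px i = 1 \<or> px i = 2 \<or> px i = 3" "pz i = 1 \<or> pz i = 2 \<or> pz i = 3" "px i \<noteq> pz i"
        using rng[OF i] by auto
      show ?thesis using r(1,2) r(3) nh[OF i] by (elim disjE) simp_all
    qed
    have relZ: "?C (Zop (v l) (e m)) = Xop {} (Zop (v l) (?C (e m)))" if m: "m \<subseteq> {0..<k}" for m
    proof -
      have "?C (Zop (v l) (e m)) = (\<lambda>x. (if l \<in> m then -1 else 1) * ?C (e m) x)"
        unfolding Zop_e[OF l] by (rule circuit_scale)
      also have "\<dots> = (\<lambda>x. \<Sum>m'\<in>Pow {0..<k}. W m' m * (if l \<in> m' then -1 else 1) * e m' x)"
      proof
        fix x
        have "(if l \<in> m then -1 else 1) * (\<Sum>m'\<in>Pow {0..<k}. W m' m * e m' x) =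
              (\<Sum>m'\<in>Pow {0..<k}. W m' m * (if l \<in> m' then -1 else 1) * e m' x)"
          unfolding sum_distrib_left
        proof (rule sum.cong)
          fix m' assume m': "m' \<in> Pow {0..<k}"
          show "(if l \<in> m then -1 else 1) * (W m' m * e m' x) = W m' m * (if l \<in> m' then -1 else 1) * e m' x"
            using unc2[OF m, of m'] m' by (cases "W m' m = 0") auto
        qed simp
        then show "(if l \<in> m then -1 else 1) * ?C (e m) x = (\<Sum>m'\<in>Pow {0..<k}. W m' m * (if l \<in> m' then -1 else 1) * e m' x)"
          using act[OF m] by simp
      qed
      also have "\<dots> = Zop (v l) (?C (e m))" using act[OF m] sumZ[OF l] by simp
      finally show ?thesis by simp
    qed
    have "sdiff (aZ (v l)) {} \<in> A" using fixZ[OF v_sub[OF l] e0 v_sub[OF l] relZ] by blast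
    moreover have "aZ (v l) = v l"
    proof (rule set_eqI)
      fix i show "i \<in> aZ (v l) \<longleftrightarrow> i \<in> v l"
      proof
        assume "i \<in> v l"
        moreover then have "i < n" using v_sub[OF l] by auto
        ultimately show "i \<in> aZ (v l)" using pz12 unfolding aZ_def by blast
      qed (auto simp: aZ_def)
    qed
    ultimately have vA: "v l \<in> A" by simp
    have relX: "?C (Xop (u l) (e m)) = Xop (u l) (Zop {} (?C (e m)))" if m: "m \<subseteq> {0..<k}" for m
    proof -
      have ml: "sdiff m {l} \<subseteq> {0..<k}" using m l by auto
      have "?C (Xop (u l) (e m)) = (\<lambda>x. \<Sum>m'\<in>Pow {0..<k}. W m' (sdiff m {l}) * e m' x)"
        unfolding Xop_e[OF l] by (rule act[OF ml])
      also have "\<dots> = (\<lambda>x. \<Sum>m'\<in>Pow {0..<k}. W (sdiff m' {l}) m * e m' x)"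
      proof (intro ext sum.cong refl)
        fix x m' assume m': "m' \<in> Pow {0..<k}"
        then show "W m' (sdiff m {l}) * e m' x = W (sdiff m' {l}) m * e m' x" using unc1[OF m, of m'] by simp
      qed
      also have "\<dots> = Xop (u l) (?C (e m))" using act[OF m] sumX[OF l] by simp
      finally show ?thesis by simp
    qed
    have "sdiff (bX (u l)) {} \<in> B" using fixX[OF u_sub[OF l] u_sub[OF l] e0 relX] by blast
    moreover have "bX (u l) = u l"
    proof (rule set_eqI)
      fix i show "i \<in> bX (u l) \<longleftrightarrow> i \<in> u l"
      proof
        assume "i \<in> u l"
        moreover then have "i < n" using u_sub[OF l] by auto
        ultimately show "i \<in> bX (u l)" using px23 unfolding bX_def by blast
      qed (auto simp: bX_def)
    qed
    ultimately have uB: "u l \<in> B" by simp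
    have "even (card (v l \<inter> u l))" by (rule orth[OF vA uB])
    then show False using vu[OF l l] by simp
  next
    case False
    then have hn: "h = {0..<n}" using htriv by simp
    have yh: "(px i = 1 \<or> px i = 2) \<and> (pz i = 2 \<or> pz i = 3)" if i: "i < n" for i
    proof -
      have "i \<in> h" using hn i by simp
      then show ?thesis unfolding h_def by simp
    qed
    have aXu: "aX a = a" if a: "a \<subseteq> {0..<n}" for a
    proof (rule set_eqI)
      fix i show "i \<in> aX a \<longleftrightarrow> i \<in> a"
      proof
        assume "i \<in> a"
        moreover then have "i < n" using a by auto
        ultimately show "i \<in> aX a" using yh unfolding aX_def by blast
      qed (auto simp: aX_def)
    qed
    have bZv: "bZ a = a" if a: "a \<subseteq> {0..<n}" for a
    proof (rule set_eqI)
      fix i show "i \<in> bZ a \<longleftrightarrow> i \<in> a"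
      proof
        assume "i \<in> a"
        moreover then have "i < n" using a by auto
        ultimately show "i \<in> bZ a" using yh unfolding bZ_def by blast
      qed (auto simp: bZ_def)
    qed
    from cov show False
    proof (elim disjE conjE)
      assume j: "j < k" and H: "\<forall>m m'. m \<subseteq> {0..<k} \<longrightarrow> m' \<subseteq> {0..<k} \<longrightarrow> W m' (sdiff m {j}) = W m' m * (if j \<in> m' then -1 else 1)"
      have rel: "?C (Xop (u j) (e m)) = Xop {} (Zop (v j) (?C (e m)))" if m: "m \<subseteq> {0..<k}" for m
      proof -
        have mj: "sdiff m {j} \<subseteq> {0..<k}" using m j by auto
        have "?C (Xop (u j) (e m)) = (\<lambda>x. \<Sum>m'\<in>Pow {0..<k}. W m' (sdiff m {j}) * e m' x)"
          unfolding Xop_e[OF j] by (rule act[OF mj])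
        also have "\<dots> = (\<lambda>x. \<Sum>m'\<in>Pow {0..<k}. W m' m * (if j \<in> m' then -1 else 1) * e m' x)"
        proof (intro ext sum.cong refl)
          fix x m' assume m': "m' \<in> Pow {0..<k}"
          have "W m' (sdiff m {j}) = W m' m * (if j \<in> m' then -1 else 1)" using H m m' by blast
          then show "W m' (sdiff m {j}) * e m' x = W m' m * (if j \<in> m' then -1 else 1) * e m' x" by simp
        qed
        also have "\<dots> = Zop (v j) (?C (e m))" using act[OF m] sumZ[OF j] by simp
        finally show ?thesis by simp
      qed
      have "sdiff (aX (u j)) {} \<in> A" using fixX[OF u_sub[OF j] e0 v_sub[OF j] rel] by blast
      then have "u j \<in> A" using aXu[OF u_sub[OF j]] by simp
      then have "even (card (v j \<inter> u j))" by (rule v_A[OF j])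
      then show False using vu[OF j j] by simp
    next
      assume j: "j < k" and HP: "\<forall>m m'. m \<subseteq> {0..<k} \<longrightarrow> m' \<subseteq> {0..<k} \<longrightarrow> W (sdiff m' {j}) m = (if j \<in> m then -1 else 1) * W m' m"
      have rel: "?C (Zop (v j) (e m)) = Xop (u j) (Zop {} (?C (e m)))" if m: "m \<subseteq> {0..<k}" for m
      proof -
        have "?C (Zop (v j) (e m)) = (\<lambda>x. (if j \<in> m then -1 else 1) * ?C (e m) x)"
          unfolding Zop_e[OF j] by (rule circuit_scale)
        also have "\<dots> = (\<lambda>x. \<Sum>m'\<in>Pow {0..<k}. W (sdiff m' {j}) m * e m' x)"
        proof
          fix x
          have "(if j \<in> m then -1 else 1) * ?C (e m) x = (\<Sum>m'\<in>Pow {0..<k}. (if j \<in> m then -1 else 1) * W m' m * e m' x)"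
            unfolding act[OF m] sum_distrib_left by (simp only: mult.assoc)
          also have "\<dots> = (\<Sum>m'\<in>Pow {0..<k}. W (sdiff m' {j}) m * e m' x)"
          proof (rule sum.cong)
            fix m' assume m': "m' \<in> Pow {0..<k}"
            have "W (sdiff m' {j}) m = (if j \<in> m then -1 else 1) * W m' m" using HP m m' by blast
            then show "(if j \<in> m then -1 else 1) * W m' m * e m' x = W (sdiff m' {j}) m * e m' x" by simp
          qed simp
          finally show "(if j \<in> m then -1 else 1) * ?C (e m) x = (\<Sum>m'\<in>Pow {0..<k}. W (sdiff m' {j}) m * e m' x)" .
        qed
        also have "\<dots> = Xop (u j) (?C (e m))" using act[OF m] sumX[OF j] by simp
        finally show ?thesis by simp
      qed
      have "sdiff (bZ (v j)) {} \<in> B" using fixZ[OF v_sub[OF j] u_sub[OF j] e0 rel] by blast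
      then have "v j \<in> B" using bZv[OF v_sub[OF j]] by simp
      then have "even (card (u j \<inter> v j))" by (rule u_B[OF j])
      then show False using vu[OF j j] by (simp add: Int_commute)
    next
      assume c: "c < k" and t: "t < k" and ct: "c \<noteq> t"
        and CN: "\<forall>m m'. m \<subseteq> {0..<k} \<longrightarrow> m' \<subseteq> {0..<k} \<longrightarrow> W m' (sdiff m {c}) = W (sdiff (sdiff m' {c}) {t}) m"
      have rel: "?C (Xop (u c) (e m)) = Xop (sdiff (u c) (u t)) (Zop {} (?C (e m)))" if m: "m \<subseteq> {0..<k}" for m
      proof -
        have mc: "sdiff m {c} \<subseteq> {0..<k}" using m c by auto
        have "?C (Xop (u c) (e m)) = (\<lambda>x. \<Sum>m'\<in>Pow {0..<k}. W m' (sdiff m {c}) * e m' x)"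
          unfolding Xop_e[OF c] by (rule act[OF mc])
        also have "\<dots> = (\<lambda>x. \<Sum>m'\<in>Pow {0..<k}. W (sdiff (sdiff m' {c}) {t}) m * e m' x)"
        proof (intro ext sum.cong refl)
          fix x m' assume m': "m' \<in> Pow {0..<k}"
          have "W m' (sdiff m {c}) = W (sdiff (sdiff m' {c}) {t}) m" using CN m m' by blast
          then show "W m' (sdiff m {c}) * e m' x = W (sdiff (sdiff m' {c}) {t}) m * e m' x" by simp
        qed
        also have "\<dots> = Xop (u c) (Xop (u t) (?C (e m)))"
          using act[OF m] sumX[OF t] sumX[OF c] by simp
        finally show ?thesis by (simp add: Xop_Xop)
      qed
      have ut: "sdiff (u c) (u t) \<subseteq> {0..<n}" using u_sub[OF c] u_sub[OF t] by (rule sdiff_subset)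
      have "sdiff (aX (u c)) (sdiff (u c) (u t)) \<in> A" using fixX[OF u_sub[OF c] ut e0 rel] by blast
      then have "u t \<in> A" using aXu[OF u_sub[OF c]] by simp
      then have "even (card (v t \<inter> u t))" by (rule v_A[OF t])
      then show False using vu[OF t t] by simp
    qed
  qed
qed

end

lemma tp_out: "(\<And>z. z \<in> set t \<Longrightarrow> z \<notin> D) \<Longrightarrow> tuple_pos t (sdiff y D) = tuple_pos t y"
  unfolding tuple_pos_def by (auto simp: nth_mem)

lemma tp_flip: assumes "distinct t" "i < length t"
  shows "tuple_pos t (sdiff y {t ! i}) = sdiff (tuple_pos t y) {i}"
  unfolding tuple_pos_def using assms by (auto simp: nth_eq_iff_index_eq)

lemma tp_0: "0 < length t \<Longrightarrow> 0 \<in> tuple_pos t y \<longleftrightarrow> t ! 0 \<in> y"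
  unfolding tuple_pos_def by auto

definition Rt :: "nat list set \<Rightarrow> mat \<Rightarrow> nat list \<Rightarrow> mat" where
  "Rt I U t0 = (\<lambda>x y. (\<Prod>t\<in>I - {t0}. U (tuple_pos t x) (tuple_pos t y)) *
      (if x - \<Union>(set ` I) = y - \<Union>(set ` I) then 1 else 0))"

lemma W_split: assumes "finite I" "t0 \<in> I"
  shows "on_tuples I U x y = U (tuple_pos t0 x) (tuple_pos t0 y) * Rt I U t0 x y"
  unfolding on_tuples_def Rt_def using prod.remove[OF assms, of "\<lambda>t. U (tuple_pos t x) (tuple_pos t y)"]
  by (simp add: mult.assoc)

lemma Rt_inv: assumes disj: "\<forall>t\<in>I. \<forall>t'\<in>I. t \<noteq> t' \<longrightarrow> set t \<inter> set t' = {}" and t0: "t0 \<in> I"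
  and D: "D \<subseteq> set t0" and E: "E \<subseteq> set t0"
  shows "Rt I U t0 (sdiff x D) (sdiff y E) = Rt I U t0 x y"
proof -
  have "(\<Prod>t\<in>I - {t0}. U (tuple_pos t (sdiff x D)) (tuple_pos t (sdiff y E))) = (\<Prod>t\<in>I - {t0}. U (tuple_pos t x) (tuple_pos t y))"
  proof (rule prod.cong)
    fix t assume t: "t \<in> I - {t0}"
    then have "set t \<inter> set t0 = {}" using disj t0 by blast
    then have "tuple_pos t (sdiff x D) = tuple_pos t x" "tuple_pos t (sdiff y E) = tuple_pos t y"
      using D E by (auto intro!: tp_out)
    then show "U (tuple_pos t (sdiff x D)) (tuple_pos t (sdiff y E)) = U (tuple_pos t x) (tuple_pos t y)" by simp
  qed simp
  moreover have "sdiff x D - \<Union>(set ` I) = x - \<Union>(set ` I)" "sdiff y E - \<Union>(set ` I) = y - \<Union>(set ` I)"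
    using D E t0 by auto
  ultimately show ?thesis unfolding Rt_def by simp
qed

lemma gate_H_prop: "gate_H w' (sdiff w {0}) = gate_H w' w * (if 0 \<in> w' then -1 else 1)"
  unfolding gate_H_def as_mat1_def by (cases "0 \<in> w'"; cases "0 \<in> w") (simp_all add: Hgate1_def)

lemma gate_PH_prop: "gate_PH w' (sdiff w {0}) = gate_PH w' w * (if 0 \<in> w' then -1 else 1)"
  unfolding gate_PH_def as_mat1_def by (cases "0 \<in> w'"; cases "0 \<in> w") (simp_all add: Hgate1_def Pgate1_def mmult1_expand)

lemma gate_HP_prop: "gate_HP (sdiff w' {0}) w = (if 0 \<in> w then -1 else 1) * gate_HP w' w"
  unfolding gate_HP_def as_mat1_def by (cases "0 \<in> w'"; cases "0 \<in> w") (simp_all add: Hgate1_def Pgate1_def mmult1_expand)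

lemma gate_CNOT_prop: "gate_CNOT w' (sdiff w {0}) = gate_CNOT (sdiff (sdiff w' {0}) {1}) w"
proof -
  have "(w' = (if 0 \<in> sdiff w {0} then sdiff (sdiff w {0}) {1} else sdiff w {0})) \<longleftrightarrow>
        (sdiff (sdiff w' {0}) {1} = (if 0 \<in> w then sdiff w {1} else w))"
  proof (cases "0 \<in> w")
    case True
    then have "0 \<notin> sdiff w {0}" by simp
    then show ?thesis using True by (auto simp: set_eq_iff)
  next
    case False
    then have "0 \<in> sdiff w {0}" by simp
    then show ?thesis using False by (auto simp: set_eq_iff)
  qed
  then show ?thesis unfolding gate_CNOT_def by simp
qed

context cssL begin

lemma PA_contra:
  assumes ns: "non_splitting n A B" and pa: "partially_addressable n A B u v p U" and p: "p \<ge> 1"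
    and gp: "(\<forall>w w'. U w' (sdiff w {0}) = U w' w * (if 0 \<in> w' then -1 else 1))
       \<or> (\<forall>w w'. U (sdiff w' {0}) w = (if 0 \<in> w then -1 else 1) * U w' w)
       \<or> (p = 2 \<and> (\<forall>w w'. U w' (sdiff w {0}) = U (sdiff (sdiff w' {0}) {1}) w))"
  shows False
proof -
  obtain I g where I: "I \<noteq> {}" "\<forall>t\<in>I. length t = p \<and> distinct t \<and> set t \<subseteq> {0..<k}"
    "\<forall>t\<in>I. \<forall>t'\<in>I. t \<noteq> t' \<longrightarrow> set t \<inter> set t' = {}" "\<Union>(set ` I) \<noteq> {0..<k}"
    and olc: "one_local_clifford n g" and lo: "logical_operator n A B (circuit n g)"
    and act0: "has_logical_action n A B u v (circuit n g) (on_tuples I U)"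
  proof -
    from pa have "\<exists>I g. I \<noteq> {} \<and>
       (\<forall>t\<in>I. length t = p \<and> distinct t \<and> set t \<subseteq> {0..<k}) \<and>
       (\<forall>t\<in>I. \<forall>t'\<in>I. t \<noteq> t' \<longrightarrow> set t \<inter> set t' = {}) \<and>
       \<Union>(set ` I) \<noteq> {0..<k} \<and>
       one_local_clifford n g \<and>
       logical_operator n A B (circuit n g) \<and>
       has_logical_action n A B u v (circuit n g) (on_tuples I U)"
      unfolding partially_addressable_def Let_def .
    then obtain I g where "I \<noteq> {} \<and>
       (\<forall>t\<in>I. length t = p \<and> distinct t \<and> set t \<subseteq> {0..<k}) \<and>
       (\<forall>t\<in>I. \<forall>t'\<in>I. t \<noteq> t' \<longrightarrow> set t \<inter> set t' = {}) \<and>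
       \<Union>(set ` I) \<noteq> {0..<k} \<and>
       one_local_clifford n g \<and>
       logical_operator n A B (circuit n g) \<and>
       has_logical_action n A B u v (circuit n g) (on_tuples I U)" by (elim exE)
    then show ?thesis using that by (elim conjE)
  qed
  let ?W = "on_tuples I U"
  let ?J = "\<Union>(set ` I)"
  have finI: "finite I"
  proof (rule finite_subset)
    show "I \<subseteq> {xs. set xs \<subseteq> {0..<k} \<and> length xs = p}" using I(2) by auto
    show "finite {xs. set xs \<subseteq> {0..<k} \<and> length xs = p}" by (rule finite_lists_length_eq) simp
  qed
  have act: "\<And>m. m \<subseteq> {0..<k} \<Longrightarrow> circuit n g (e m) = (\<lambda>x. \<Sum>m'\<in>Pow {0..<k}. ?W m' m * e m' x)"
    by (rule action_e[OF act0])
  have Jk: "?J \<subseteq> {0..<k}" using I(2) by auto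
  have "{0..<k} - ?J \<noteq> {}" using I(4) Jk by blast
  then obtain l0 where "l0 \<in> {0..<k} - ?J" by blast
  then obtain l where l: "l < k" "l \<notin> ?J" by auto
  have lt: "\<And>t. t \<in> I \<Longrightarrow> z \<in> set t \<Longrightarrow> z \<noteq> l" for z using l(2) by auto
  have unc1: "?W m' (sdiff m {l}) = ?W (sdiff m' {l}) m" for m m'
  proof -
    have tp: "tuple_pos t (sdiff y {l}) = tuple_pos t y" if "t \<in> I" for t y
      by (rule tp_out) (use lt[OF that] in auto)
    have e1: "sdiff m {l} - ?J = sdiff (m - ?J) {l}" "sdiff m' {l} - ?J = sdiff (m' - ?J) {l}"
      using l(2) by auto
    have "(m' - ?J = sdiff m {l} - ?J) \<longleftrightarrow> (sdiff m' {l} - ?J = m - ?J)"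
      unfolding e1 by (metis sdiff_cancel(2))
    then show ?thesis unfolding on_tuples_def using tp by simp
  qed
  have unc2: "(l \<in> m') = (l \<in> m)" if "?W m' m \<noteq> 0" for m m'
  proof -
    have "m' - ?J = m - ?J" using that unfolding on_tuples_def by (auto split: if_splits)
    then show ?thesis using l(2) by blast
  qed
  obtain t0 where t0: "t0 \<in> I" using I(1) by blast
  have t0p: "length t0 = p" "distinct t0" "set t0 \<subseteq> {0..<k}" using I(2) t0 by auto
  have l0: "0 < length t0" using t0p p by simp
  define j where "j = t0 ! 0"
  have jk: "j < k"
  proof -
    have "t0 ! 0 \<in> set t0" by (rule nth_mem[OF l0])
    then show ?thesis using t0p(3) unfolding j_def by auto
  qed
  have jt: "{j} \<subseteq> set t0" unfolding j_def using nth_mem[OF l0] by simp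
  have tpj: "tuple_pos t0 (sdiff y {j}) = sdiff (tuple_pos t0 y) {0}" for y
    unfolding j_def by (rule tp_flip[OF t0p(2) l0])
  have j0: "0 \<in> tuple_pos t0 y \<longleftrightarrow> j \<in> y" for y unfolding j_def by (rule tp_0[OF l0])
  note Ws = W_split[OF finI t0]
  note Ri = Rt_inv[OF I(3) t0]
  have cov: "(j < k \<and> (\<forall>m m'. m \<subseteq> {0..<k} \<longrightarrow> m' \<subseteq> {0..<k} \<longrightarrow> ?W m' (sdiff m {j}) = ?W m' m * (if j \<in> m' then -1 else 1)))
      \<or> (j < k \<and> (\<forall>m m'. m \<subseteq> {0..<k} \<longrightarrow> m' \<subseteq> {0..<k} \<longrightarrow> ?W (sdiff m' {j}) m = (if j \<in> m then -1 else 1) * ?W m' m))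
      \<or> (j < k \<and> t0 ! 1 < k \<and> j \<noteq> t0 ! 1 \<and> (\<forall>m m'. m \<subseteq> {0..<k} \<longrightarrow> m' \<subseteq> {0..<k} \<longrightarrow> ?W m' (sdiff m {j}) = ?W (sdiff (sdiff m' {j}) {t0 ! 1}) m))"
    using gp
  proof (elim disjE conjE)
    assume H: "\<forall>w w'. U w' (sdiff w {0}) = U w' w * (if 0 \<in> w' then -1 else 1)"
    have "?W m' (sdiff m {j}) = ?W m' m * (if j \<in> m' then -1 else 1)" for m m'
    proof -
      have "?W m' (sdiff m {j}) = U (tuple_pos t0 m') (sdiff (tuple_pos t0 m) {0}) * Rt I U t0 m' m"
        using Ws[where x=m' and y="sdiff m {j}"] Ri[where D="{}" and E="{j}" and x=m' and y=m and U=U] jt by (simp add: tpj)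
      also have "\<dots> = ?W m' m * (if j \<in> m' then -1 else 1)"
        using H Ws[where x=m' and y=m] by (simp add: j0)
      finally show ?thesis .
    qed
    then show ?thesis using jk by blast
  next
    assume HP: "\<forall>w w'. U (sdiff w' {0}) w = (if 0 \<in> w then -1 else 1) * U w' w"
    have "?W (sdiff m' {j}) m = (if j \<in> m then -1 else 1) * ?W m' m" for m m'
    proof -
      have "?W (sdiff m' {j}) m = U (sdiff (tuple_pos t0 m') {0}) (tuple_pos t0 m) * Rt I U t0 m' m"
        using Ws[where x="sdiff m' {j}" and y=m] Ri[where D="{j}" and E="{}" and x=m' and y=m and U=U] jt by (simp add: tpj)
      also have "\<dots> = (if j \<in> m then -1 else 1) * ?W m' m"
        using HP Ws[where x=m' and y=m] by (simp add: j0)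
      finally show ?thesis .
    qed
    then show ?thesis using jk by blast
  next
    assume p2: "p = 2" and CN: "\<forall>w w'. U w' (sdiff w {0}) = U (sdiff (sdiff w' {0}) {1}) w"
    have l1: "1 < length t0" using t0p p2 by simp
    define tt where "tt = t0 ! 1"
    have ttk: "tt < k"
    proof -
      have "t0 ! 1 \<in> set t0" by (rule nth_mem[OF l1])
      then show ?thesis using t0p(3) unfolding tt_def by auto
    qed
    have jtt: "j \<noteq> tt" unfolding j_def tt_def using nth_eq_iff_index_eq[OF t0p(2) l0 l1] by simp
    have ttt: "{tt} \<subseteq> set t0" unfolding tt_def using nth_mem[OF l1] by simp
    have tpt: "tuple_pos t0 (sdiff y {tt}) = sdiff (tuple_pos t0 y) {1}" for y
      unfolding tt_def by (rule tp_flip[OF t0p(2) l1])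
    have "?W m' (sdiff m {j}) = ?W (sdiff (sdiff m' {j}) {tt}) m" for m m'
    proof -
      have "?W m' (sdiff m {j}) = U (tuple_pos t0 m') (sdiff (tuple_pos t0 m) {0}) * Rt I U t0 m' m"
        using Ws[where x=m' and y="sdiff m {j}"] Ri[where D="{}" and E="{j}" and x=m' and y=m and U=U] jt by (simp add: tpj)
      also have "\<dots> = U (sdiff (sdiff (tuple_pos t0 m') {0}) {1}) (tuple_pos t0 m) * Rt I U t0 m' m"
        using CN by simp
      also have "Rt I U t0 m' m = Rt I U t0 (sdiff (sdiff m' {j}) {tt}) m"
        using Ri[where D="{j}" and E="{}" and x=m' and y=m and U=U] Ri[where D="{tt}" and E="{}" and x="sdiff m' {j}" and y=m and U=U] jt ttt by simp
      also have "U (sdiff (sdiff (tuple_pos t0 m') {0}) {1}) (tuple_pos t0 m) * Rt I U t0 (sdiff (sdiff m' {j}) {tt}) m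
          = ?W (sdiff (sdiff m' {j}) {tt}) m"
        using Ws[where x="sdiff (sdiff m' {j}) {tt}" and y=m] by (simp add: tpj tpt)
      finally show ?thesis .
    qed
    then show ?thesis using jk ttk jtt unfolding tt_def by blast
  qed
  show False
    by (rule main_contra[OF ns olc lo act l(1) _ _ cov]) (use unc1 unc2 in auto)
qed

end

theorem proposition9:
  assumes "css_code n A B"
    and "non_splitting n A B"
    and "css_logicals n A B u v"
  shows "\<not> partially_addressable n A B u v 1 gate_H \<and>
         \<not> partially_addressable n A B u v 1 gate_PH \<and>
         \<not> partially_addressable n A B u v 1 gate_HP \<and>
         \<not> partially_addressable n A B u v 2 gate_CNOT"
proof -
  interpret cssL n A B u v using assms(1,3) by unfold_locales
  show ?thesis
  proof (intro conjI notI)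
    assume "partially_addressable n A B u v 1 gate_H"
    then show False by (rule PA_contra[OF assms(2)]) (use gate_H_prop in auto)
  next
    assume "partially_addressable n A B u v 1 gate_PH"
    then show False by (rule PA_contra[OF assms(2)]) (use gate_PH_prop in auto)
  next
    assume "partially_addressable n A B u v 1 gate_HP"
    then show False by (rule PA_contra[OF assms(2)]) (use gate_HP_prop in auto)
  next
    assume "partially_addressable n A B u v 2 gate_CNOT"
    then show False by (rule PA_contra[OF assms(2)]) (use gate_CNOT_prop in auto)
  qed
qed

end
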